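(* Let $k,m$ be positive integers, $n=km$, $f:\mathbb{N}\to\mathbb{N}$ monotonically decreasing (nonincreasing), and $T_1,\dots,T_n\in\{H,L\}$ with $0\le H<L$. Let $\mathbf{x}$ be the decision sequence output by Algorithm 1 on input capacities $m_1=\dots=m_k=m$ and task sequence $T_1,\dots,T_n$. Then $\mathbf{x}$ assigns exactly $m$ tasks to each agent, and its total cost $\sum_{t=1}^n f(p_t)\,T_t$ is minimum among all size-$m$ $k$-allocation schemes of the $n$ tasks (equivalently, among all decision sequences assigning exactly $m$ tasks to each agent).
   Context: Positional allocation problem: given $n=km$ tasks with intrinsic costs $T_1,\dots,T_n$ and $k$ agents, a decision sequence $\mathbf{x}=(x_1,\dots,x_n)\in[k]^n$ assigns task $t$ to agent $x_t$, with each agent receiving exactly $m$ tasks; tasks assigned to the same agent are processed in increasing index order, and the position of task $t$ is $p_t=|\{s\le t: x_s=x_t\}|$. Its total cost is $\sum_{t=1}^n f(p_t)T_t$ (equivalently, $\sum_{r=1}^k\sum_{p=1}^m f(p)\,T_{r,p}$ where $T_{r,p}$ is the cost of the $p$-th task of agent $r$). Algorithm 1 (simulation-based threshold algorithm). Input: integers $0\le m_1\le\dots\le m_k$ and a sequence $T_1,\dots,T_n$ with $n=\sum_r m_r$. Set $q^{(1)}_r=m_r$ for all $r$. For $t=1,\dots,n$: set $x_t=\mathrm{TA}(q^{(t)}_1,\dots,q^{(t)}_k;\,T_t,T_{t+1},\dots,T_n)$ and $q^{(t+1)}_r=q^{(t)}_r-\mathbf{1}(x_t=r)$ for each $r$.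 Output $\mathbf{x}=(x_1,\dots,x_n)$. Subroutine $\mathrm{TA}(m_1,\dots,m_k;\,S_1,\dots,S_N)$ (ThresholdAllocation), with the convention $m_0:=0$: for $\gamma=k,k-1,\dots,1$: if $m_\gamma=m_{\gamma-1}$, go to the next $\gamma$; otherwise, for $h=\gamma,\gamma+1,\dots,k$: let $Z_L=\sum_{i=1}^{h-1}\min\{m_i,m_{\gamma-1}\}$ and $Z_H=\sum_{i=\gamma}^{h}(m_i-m_{\gamma-1})$; if $|\{i\in\{1,\dots,Z_L+Z_H\}: S_i>S_1\}|\ge Z_L$, return $\gamma$ (agent to which $S_1$ is assigned). *)

theory Defs
  imports Complex_Main
begin

text \<open>Agents are indexed 1..k, tasks 1..n. Capacities are functions nat => nat
  (only indices 1..k matter); the convention m_0 := 0 is implemented by cap0.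
  Task sequences S, T are functions nat => real indexed from 1.\<close>

definition cap0 :: "(nat \<Rightarrow> nat) \<Rightarrow> nat \<Rightarrow> nat" where
  "cap0 ms i = (if i = 0 then 0 else ms i)"

text \<open>The test of the inner loop of ThresholdAllocation for given gamma and h.\<close>
definition ta_test :: "(nat \<Rightarrow> nat) \<Rightarrow> (nat \<Rightarrow> real) \<Rightarrow> nat \<Rightarrow> nat \<Rightarrow> bool" where
  "ta_test ms S \<gamma> h =
     (let ZL = (\<Sum>i = 1..h - 1. min (cap0 ms i) (cap0 ms (\<gamma> - 1)));
          ZH = (\<Sum>i = \<gamma>..h. cap0 ms i - cap0 ms (\<gamma> - 1))
      in card {i \<in> {1..ZL + ZH}. S i > S 1} \<ge> ZL)"

text \<open>Outer loop over gamma = g, g-1, ..., 1 (returns 0 if the loop finishes without returning).\<close>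
fun ta_loop :: "nat \<Rightarrow> (nat \<Rightarrow> nat) \<Rightarrow> (nat \<Rightarrow> real) \<Rightarrow> nat \<Rightarrow> nat" where
  "ta_loop k ms S 0 = 0"
| "ta_loop k ms S (Suc g) =
     (if cap0 ms (Suc g) \<noteq> cap0 ms g \<and> (\<exists>h \<in> {Suc g..k}. ta_test ms S (Suc g) h)
      then Suc g else ta_loop k ms S g)"

definition TA :: "nat \<Rightarrow> (nat \<Rightarrow> nat) \<Rightarrow> (nat \<Rightarrow> real) \<Rightarrow> nat" where
  "TA k ms S = ta_loop k ms S k"

text \<open>alg_cap k ms T j = q^(j+1) (capacities before step j+1) of Algorithm 1.\<close>
fun alg_cap :: "nat \<Rightarrow> (nat \<Rightarrow> nat) \<Rightarrow> (nat \<Rightarrow> real) \<Rightarrow> nat \<Rightarrow> (nat \<Rightarrow> nat)" where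
  "alg_cap k ms T 0 = ms"
| "alg_cap k ms T (Suc j) =
     (\<lambda>r. alg_cap k ms T j r -
          (if TA k (alg_cap k ms T j) (\<lambda>i. T (j + i)) = r then 1 else 0))"

definition alg1 :: "nat \<Rightarrow> (nat \<Rightarrow> nat) \<Rightarrow> (nat \<Rightarrow> real) \<Rightarrow> nat \<Rightarrow> nat" where
  "alg1 k ms T t = TA k (alg_cap k ms T (t - 1)) (\<lambda>i. T (t - 1 + i))"

definition pos :: "(nat \<Rightarrow> nat) \<Rightarrow> nat \<Rightarrow> nat" where
  "pos x t = card {s \<in> {1..t}. x s = x t}"

definition total_cost :: "(nat \<Rightarrow> nat) \<Rightarrow> (nat \<Rightarrow> real) \<Rightarrow> nat \<Rightarrow> (nat \<Rightarrow> nat) \<Rightarrow> real" where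
  "total_cost f T n x = (\<Sum>t = 1..n. real (f (pos x t)) * T t)"

definition is_alloc :: "nat \<Rightarrow> nat \<Rightarrow> nat \<Rightarrow> (nat \<Rightarrow> nat) \<Rightarrow> bool" where
  "is_alloc k m n x = ((\<forall>t \<in> {1..n}. x t \<in> {1..k}) \<and>
                       (\<forall>r \<in> {1..k}. card {t \<in> {1..n}. x t = r} = m))"

end

theory Submission
  imports Defs
begin

definition Gk :: "nat \<Rightarrow> nat \<Rightarrow> (nat \<Rightarrow> nat) \<Rightarrow> nat \<Rightarrow> nat" where
 "Gk k u q a = Max ((\<lambda>X. \<Sum>i\<in>X. min (q i) u) ` {X. X \<subseteq> {1..k} \<and> (\<Sum>i\<in>X. q i - u) \<le> a})"

lemma Gk_fin: "finite {X. X \<subseteq> {1..(k::nat)} \<and> (\<Sum>i\<in>X. q i - u) \<le> (a::nat)}"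
  by (rule finite_subset[of _ "Pow {1..k}"]) auto

lemma Gk_ge: "X \<subseteq> {1..k} \<Longrightarrow> (\<Sum>i\<in>X. q i - u) \<le> a \<Longrightarrow> (\<Sum>i\<in>X. min (q i) u) \<le> Gk k u q a"
  unfolding Gk_def by (rule Max_ge) (use Gk_fin in auto)

lemma Gk_ex: "\<exists>X. X \<subseteq> {1..k} \<and> (\<Sum>i\<in>X. q i - u) \<le> a \<and> Gk k u q a = (\<Sum>i\<in>X. min (q i) u)"
proof -
  let ?S = "{X. X \<subseteq> {1..k} \<and> (\<Sum>i\<in>X. q i - u) \<le> a}"
  have ne: "{} \<in> ?S" by simp
  have "Gk k u q a \<in> (\<lambda>X. \<Sum>i\<in>X. min (q i) u) ` ?S"
    unfolding Gk_def by (rule Max_in[OF finite_imageI[OF Gk_fin]]) (use ne in blast)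
  then obtain X where "X \<in> ?S" "Gk k u q a = (\<Sum>i\<in>X. min (q i) u)" by (rule imageE)
  then show ?thesis by blast
qed

lemma Gk_transfer:
  assumes "\<And>X. X \<subseteq> {1..k} \<Longrightarrow> (\<Sum>i\<in>X. q i - u) \<le> a \<Longrightarrow>
     \<exists>X'. X' \<subseteq> {1..k} \<and> (\<Sum>i\<in>X'. q' i - u') \<le> b \<and> (\<Sum>i\<in>X. min (q i) u) \<le> (\<Sum>i\<in>X'. min (q' i) u') + d"
  shows "Gk k u q a \<le> Gk k u' q' b + d"
proof -
  obtain X where X: "X \<subseteq> {1..k}" "(\<Sum>i\<in>X. q i - u) \<le> a" "Gk k u q a = (\<Sum>i\<in>X. min (q i) u)"
    using Gk_ex[where k=k and u=u and q=q and a=a] by (elim exE conjE)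
  from assms[OF X(1,2)] obtain X' where X': "X' \<subseteq> {1..k}" "(\<Sum>i\<in>X'. q' i - u') \<le> b"
     "(\<Sum>i\<in>X. min (q i) u) \<le> (\<Sum>i\<in>X'. min (q' i) u') + d"
    by (elim exE conjE)
  have "(\<Sum>i\<in>X'. min (q' i) u') \<le> Gk k u' q' b" by (rule Gk_ge[OF X'(1,2)])
  with X(3) X'(3) show ?thesis by linarith
qed

lemma Gk_transfer2:
  assumes "\<And>X. X \<subseteq> {1..k} \<Longrightarrow> (\<Sum>i\<in>X. q i - u) \<le> a \<Longrightarrow>
     \<exists>X'. X' \<subseteq> {1..k} \<and> (\<Sum>i\<in>X'. q' i - u') \<le> b \<and> (\<Sum>i\<in>X. min (q i) u) + d \<le> (\<Sum>i\<in>X'. min (q' i) u') + e"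
  shows "Gk k u q a + d \<le> Gk k u' q' b + e"
proof -
  obtain X where X: "X \<subseteq> {1..k}" "(\<Sum>i\<in>X. q i - u) \<le> a" "Gk k u q a = (\<Sum>i\<in>X. min (q i) u)"
    using Gk_ex[where k=k and u=u and q=q and a=a] by (elim exE conjE)
  from assms[OF X(1,2)] obtain X' where X': "X' \<subseteq> {1..k}" "(\<Sum>i\<in>X'. q' i - u') \<le> b"
     "(\<Sum>i\<in>X. min (q i) u) + d \<le> (\<Sum>i\<in>X'. min (q' i) u') + e"
    by (elim exE conjE)
  have "(\<Sum>i\<in>X'. min (q' i) u') \<le> Gk k u' q' b" by (rule Gk_ge[OF X'(1,2)])
  with X(3) X'(3) show ?thesis by linarith
qed

lemma Gk_mono: "a \<le> b \<Longrightarrow> Gk k u q a \<le> Gk k u q b"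
proof -
  obtain X where X: "X \<subseteq> {1..k}" "(\<Sum>i\<in>X. q i - u) \<le> a" "Gk k u q a = (\<Sum>i\<in>X. min (q i) u)"
    using Gk_ex[where k=k and u=u and q=q and a=a] by (elim exE conjE)
  assume "a \<le> b"
  with X(2) have "(\<Sum>i\<in>X. q i - u) \<le> b" by linarith
  from Gk_ge[OF X(1) this] X(3) show ?thesis by simp
qed

definition need :: "nat \<Rightarrow> nat \<Rightarrow> (nat \<Rightarrow> nat) \<Rightarrow> nat \<Rightarrow> nat" where
  "need k u q j = (LEAST a. j \<le> a + Gk k u q a)"

lemma need_spec: "j \<le> need k u q j + Gk k u q (need k u q j)"
  unfolding need_def by (rule LeastI[of _ j]) simp

lemma need_le: "j \<le> a + Gk k u q a \<Longrightarrow> need k u q j \<le> a"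
  unfolding need_def by (rule Least_le)

lemma need_le_iff: "need k u q j \<le> a \<longleftrightarrow> j \<le> a + Gk k u q a"
proof
  assume "need k u q j \<le> a"
  then show "j \<le> a + Gk k u q a" using need_spec[of j k u q] Gk_mono[of "need k u q j" a k u q] by linarith
qed (rule need_le)

lemma need_mono: "j \<le> j' \<Longrightarrow> need k u q j \<le> need k u q j'"
  using need_spec[of j' k u q] by (intro need_le) linarith

lemma need_0[simp]: "need k u q 0 = 0"
  using need_le[of 0 0 k u q] by simp

definition Hc :: "(nat \<Rightarrow> bool) \<Rightarrow> nat \<Rightarrow> nat" where
  "Hc isL j = (\<Sum>i=1..j. if isL i then 0 else 1)"

lemma Hc_0[simp]: "Hc isL 0 = 0" by (simp add: Hc_def)

lemma Hc_shift: "Hc isL (Suc j) = (if isL 1 then 0 else 1) + Hc (\<lambda>i. isL (Suc i)) j"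
proof -
  have "Hc isL (Suc j) = (if isL 1 then 0 else 1) + (\<Sum>i=Suc 1..Suc j. if isL i then 0 else 1)"
    unfolding Hc_def by (subst sum.atLeast_Suc_atMost) auto
  also have "(\<Sum>i=Suc 1..Suc j. if isL i then 0 else (1::nat)) = Hc (\<lambda>i. isL (Suc i)) j"
    unfolding Hc_def by (rule sum.shift_bounds_cl_Suc_ivl)
  finally show ?thesis .
qed

lemma Hc_le: "Hc isL j \<le> j"
  unfolding Hc_def by (rule order.trans[OF sum_mono[of _ _ "\<lambda>_. 1"]]) auto

lemma Hc_mono: "j \<le> j' \<Longrightarrow> Hc isL j \<le> Hc isL j'"
  unfolding Hc_def by (rule sum_mono2) auto

lemma Hc_diff: "j \<le> j' \<Longrightarrow> Hc isL j' \<le> Hc isL j + (j' - j)"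
proof (induction j' rule: dec_induct)
  case (step n)
  have "Hc isL (Suc n) = Hc isL n + (if isL (Suc n) then 0 else 1)" by (simp add: Hc_def)
  then show ?case using step by auto
qed simp

lemma Hc_card: "Hc isL j = card {i\<in>{1..j}. \<not> isL i}"
proof -
  have "card {i\<in>{1..j}. \<not> isL i} = (\<Sum>i\<in>{i\<in>{1..j}. \<not> isL i}. (1::nat))" by simp
  also have "\<dots> = (\<Sum>i=1..j. if \<not> isL i then 1 else 0)" by (rule sum.inter_filter) simp
  also have "\<dots> = Hc isL j" unfolding Hc_def by (rule sum.cong) auto
  finally show ?thesis by simp
qed

definition Phi :: "nat \<Rightarrow> nat \<Rightarrow> (nat \<Rightarrow> nat) \<Rightarrow> (nat \<Rightarrow> bool) \<Rightarrow> nat \<Rightarrow> int" where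
  "Phi k u q isL N = Max ((\<lambda>j. int (need k u q j) - int (Hc isL j)) ` {0..N})"

lemma Phi_ge: "j \<le> N \<Longrightarrow> int (need k u q j) - int (Hc isL j) \<le> Phi k u q isL N"
  unfolding Phi_def by (rule Max_ge) auto

lemma Phi_ex: "\<exists>j\<le>N. Phi k u q isL N = int (need k u q j) - int (Hc isL j)"
proof -
  have "Phi k u q isL N \<in> (\<lambda>j. int (need k u q j) - int (Hc isL j)) ` {0..N}"
    unfolding Phi_def by (rule Max_in) auto
  then show ?thesis by auto
qed

lemma Phi_nonneg: "0 \<le> Phi k u q isL N"
  using Phi_ge[of 0 N k u q isL] by simp

lemma sum_upd_eq:
  fixes g :: "nat \<Rightarrow> nat"
  assumes "finite X"
  shows "(\<Sum>i\<in>X. g ((q(r:=v)) i)) + (if r\<in>X then g (q r) else 0) = (\<Sum>i\<in>X. g (q i)) + (if r \<in> X then g v else 0)"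
proof (cases "r \<in> X")
  case True
  have e1: "(\<Sum>i\<in>X. g ((q(r:=v)) i)) = g v + (\<Sum>i\<in>X-{r}. g ((q(r:=v)) i))"
    using sum.remove[OF assms True, of "\<lambda>i. g ((q(r:=v)) i)"] by simp
  have e2: "(\<Sum>i\<in>X-{r}. g ((q(r:=v)) i)) = (\<Sum>i\<in>X-{r}. g (q i))" by (rule sum.cong) auto
  have e3: "(\<Sum>i\<in>X. g (q i)) = g (q r) + (\<Sum>i\<in>X-{r}. g (q i))"
    using sum.remove[OF assms True, of "\<lambda>i. g (q i)"] by simp
  show ?thesis using True e1 e2 e3 by simp
next
  case False
  have "(\<Sum>i\<in>X. g ((q(r:=v)) i)) = (\<Sum>i\<in>X. g (q i))" by (rule sum.cong) (use False in auto)
  then show ?thesis using False by simp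
qed

lemma fin_sub: "X \<subseteq> {1..(k::nat)} \<Longrightarrow> finite X"
  by (rule finite_subset) auto

lemma G1: assumes "q r > u"
  shows "Gk k u (q(r := q r - 1)) a \<le> Gk k u q (Suc a)"
proof -
  have "Gk k u (q(r := q r - 1)) a + 0 \<le> Gk k u q (Suc a) + 0"
  proof (rule Gk_transfer2)
    fix X assume X: "X \<subseteq> {1..k}" "(\<Sum>i\<in>X. (q(r := q r - 1)) i - u) \<le> a"
    have f: "finite X" using X(1) by (rule fin_sub)
    have c: "(\<Sum>i\<in>X. (q(r := q r - 1)) i - u) + (if r\<in>X then q r - u else 0) = (\<Sum>i\<in>X. q i - u) + (if r \<in> X then q r - 1 - u else 0)"
      using sum_upd_eq[OF f, of "\<lambda>x. x - u" q r "q r - 1"] by simp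
    have v: "(\<Sum>i\<in>X. min ((q(r := q r - 1)) i) u) + (if r\<in>X then min (q r) u else 0) = (\<Sum>i\<in>X. min (q i) u) + (if r \<in> X then min (q r - 1) u else 0)"
      using sum_upd_eq[OF f, of "\<lambda>x. min x u" q r "q r - 1"] by simp
    have "(\<Sum>i\<in>X. q i - u) \<le> Suc a" using c X(2) assms by (auto split: if_splits)
    moreover have "(\<Sum>i\<in>X. min ((q(r := q r - 1)) i) u) + 0 \<le> (\<Sum>i\<in>X. min (q i) u) + 0"
      using v assms by (auto split: if_splits)
    ultimately show "\<exists>X'. X' \<subseteq> {1..k} \<and> (\<Sum>i\<in>X'. q i - u) \<le> Suc a \<and>
        (\<Sum>i\<in>X. min ((q(r := q r - 1)) i) u) + 0 \<le> (\<Sum>i\<in>X'. min (q i) u) + 0"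
      using X(1) by blast
  qed
  then show ?thesis by simp
qed

lemma sum_notin_upd: "r \<notin> X \<Longrightarrow> (\<Sum>i\<in>X. g ((q(r:=v)) i)) = (\<Sum>i\<in>X. g (q i))"
  by (rule sum.cong) auto

lemma G2: assumes "q r \<le> u" "1 \<le> q r" "r \<in> {1..k}"
  shows "Gk k u (q(r := q r - 1)) a + 1 \<le> Gk k u q a"
proof -
  have "Gk k u (q(r := q r - 1)) a + 1 \<le> Gk k u q a + 0"
  proof (rule Gk_transfer2)
    fix X assume X: "X \<subseteq> {1..k}" "(\<Sum>i\<in>X. (q(r := q r - 1)) i - u) \<le> a"
    let ?Y = "insert r X"
    have Y: "?Y \<subseteq> {1..k}" using X(1) assms(3) by blast
    have f: "finite ?Y" using Y by (rule fin_sub)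
    have fX: "finite X" using X(1) by (rule fin_sub)
    have c: "(\<Sum>i\<in>?Y. (q(r := q r - 1)) i - u) + (if r\<in>?Y then q r - u else 0) = (\<Sum>i\<in>?Y. q i - u) + (if r \<in> ?Y then q r - 1 - u else 0)"
      using sum_upd_eq[OF f, of "\<lambda>x. x - u" q r "q r - 1"] by simp
    have v: "(\<Sum>i\<in>?Y. min ((q(r := q r - 1)) i) u) + (if r\<in>?Y then min (q r) u else 0) = (\<Sum>i\<in>?Y. min (q i) u) + (if r \<in> ?Y then min (q r - 1) u else 0)"
      using sum_upd_eq[OF f, of "\<lambda>x. min x u" q r "q r - 1"] by simp
    have c2: "(\<Sum>i\<in>?Y. (q(r := q r - 1)) i - u) = (\<Sum>i\<in>X. (q(r := q r - 1)) i - u)"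
      using assms(1) fX by (simp add: sum.insert_if)
    have v2: "(\<Sum>i\<in>X. min ((q(r := q r - 1)) i) u) \<le> (\<Sum>i\<in>?Y. min ((q(r := q r - 1)) i) u)"
      by (rule sum_mono2[OF f]) auto
    have "(\<Sum>i\<in>?Y. q i - u) \<le> a" using c c2 X(2) assms by simp
    moreover have "(\<Sum>i\<in>X. min ((q(r := q r - 1)) i) u) + 1 \<le> (\<Sum>i\<in>?Y. min (q i) u) + 0"
      using v v2 assms by simp
    ultimately show "\<exists>X'. X' \<subseteq> {1..k} \<and> (\<Sum>i\<in>X'. q i - u) \<le> a \<and>
        (\<Sum>i\<in>X. min ((q(r := q r - 1)) i) u) + 1 \<le> (\<Sum>i\<in>X'. min (q i) u) + 0"
      using Y by blast
  qed
  then show ?thesis by simp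
qed

lemma G3: assumes "q r \<le> u"
  shows "Gk k u q a \<le> Gk k u (q(r := q r - 1)) a + 1"
proof -
  have "Gk k u q a + 0 \<le> Gk k u (q(r := q r - 1)) a + 1"
  proof (rule Gk_transfer2)
    fix X assume X: "X \<subseteq> {1..k}" "(\<Sum>i\<in>X. q i - u) \<le> a"
    have f: "finite X" using X(1) by (rule fin_sub)
    have c: "(\<Sum>i\<in>X. (q(r := q r - 1)) i - u) + (if r\<in>X then q r - u else 0) = (\<Sum>i\<in>X. q i - u) + (if r \<in> X then q r - 1 - u else 0)"
      using sum_upd_eq[OF f, of "\<lambda>x. x - u" q r "q r - 1"] by simp
    have v: "(\<Sum>i\<in>X. min ((q(r := q r - 1)) i) u) + (if r\<in>X then min (q r) u else 0) = (\<Sum>i\<in>X. min (q i) u) + (if r \<in> X then min (q r - 1) u else 0)"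
      using sum_upd_eq[OF f, of "\<lambda>x. min x u" q r "q r - 1"] by simp
    have z: "q r - u = 0" "q r - 1 - u = 0" using assms by auto
    have "(\<Sum>i\<in>X. (q(r := q r - 1)) i - u) \<le> a" using c X(2) assms by (cases "r \<in> X"; simp del: fun_upd_apply; linarith)
    moreover have "(\<Sum>i\<in>X. min (q i) u) + 0 \<le> (\<Sum>i\<in>X. min ((q(r := q r - 1)) i) u) + 1"
      using v assms by (auto split: if_splits)
    ultimately show "\<exists>X'. X' \<subseteq> {1..k} \<and> (\<Sum>i\<in>X'. (q(r := q r - 1)) i - u) \<le> a \<and>
        (\<Sum>i\<in>X. min (q i) u) + 0 \<le> (\<Sum>i\<in>X'. min ((q(r := q r - 1)) i) u) + 1"
      using X(1) by blast
  qed
  then show ?thesis by simp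
qed

lemma G4: assumes "q r > u"
  shows "Gk k u q a \<le> Gk k u (q(r := q r - 1)) a"
proof -
  have "Gk k u q a + 0 \<le> Gk k u (q(r := q r - 1)) a + 0"
  proof (rule Gk_transfer2)
    fix X assume X: "X \<subseteq> {1..k}" "(\<Sum>i\<in>X. q i - u) \<le> a"
    have f: "finite X" using X(1) by (rule fin_sub)
    have c: "(\<Sum>i\<in>X. (q(r := q r - 1)) i - u) + (if r\<in>X then q r - u else 0) = (\<Sum>i\<in>X. q i - u) + (if r \<in> X then q r - 1 - u else 0)"
      using sum_upd_eq[OF f, of "\<lambda>x. x - u" q r "q r - 1"] by simp
    have v: "(\<Sum>i\<in>X. min ((q(r := q r - 1)) i) u) + (if r\<in>X then min (q r) u else 0) = (\<Sum>i\<in>X. min (q i) u) + (if r \<in> X then min (q r - 1) u else 0)"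
      using sum_upd_eq[OF f, of "\<lambda>x. min x u" q r "q r - 1"] by simp
    have "(\<Sum>i\<in>X. (q(r := q r - 1)) i - u) \<le> a" using c X(2) assms by (auto split: if_splits)
    moreover have "(\<Sum>i\<in>X. min (q i) u) + 0 \<le> (\<Sum>i\<in>X. min ((q(r := q r - 1)) i) u) + 0"
      using v assms by (auto split: if_splits)
    ultimately show "\<exists>X'. X' \<subseteq> {1..k} \<and> (\<Sum>i\<in>X'. (q(r := q r - 1)) i - u) \<le> a \<and>
        (\<Sum>i\<in>X. min (q i) u) + 0 \<le> (\<Sum>i\<in>X'. min ((q(r := q r - 1)) i) u) + 0"
      using X(1) by blast
  qed
  then show ?thesis by simp
qed

lemma G6: assumes "u0 \<le> u"
  shows "Gk k u0 q a \<le> Gk k u q a"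
proof -
  have "Gk k u0 q a + 0 \<le> Gk k u q a + 0"
  proof (rule Gk_transfer2)
    fix X assume X: "X \<subseteq> {1..k}" "(\<Sum>i\<in>X. q i - u0) \<le> a"
    have "(\<Sum>i\<in>X. q i - u) \<le> (\<Sum>i\<in>X. q i - u0)" by (rule sum_mono) (use assms in auto)
    moreover have "(\<Sum>i\<in>X. min (q i) u0) \<le> (\<Sum>i\<in>X. min (q i) u)" by (rule sum_mono) (use assms in auto)
    ultimately show "\<exists>X'. X' \<subseteq> {1..k} \<and> (\<Sum>i\<in>X'. q i - u) \<le> a \<and>
        (\<Sum>i\<in>X. min (q i) u0) + 0 \<le> (\<Sum>i\<in>X'. min (q i) u) + 0"
      using X by (intro exI[of _ X]) auto
  qed
  then show ?thesis by simp
qed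

lemma G5: assumes "q r > u" "r \<in> {1..k}" "(\<Sum>i\<in>{i\<in>{1..k}. q i < q r}. q i - u) \<le> a"
  shows "Gk k u q (Suc a) \<le> Gk k u (q(r := q r - 1)) a"
proof -
  have "Gk k u q (Suc a) + 0 \<le> Gk k u (q(r := q r - 1)) a + 0"
  proof (rule Gk_transfer2)
    fix X assume X: "X \<subseteq> {1..k}" "(\<Sum>i\<in>X. q i - u) \<le> Suc a"
    have f: "finite X" using X(1) by (rule fin_sub)
    show "\<exists>X'. X' \<subseteq> {1..k} \<and> (\<Sum>i\<in>X'. (q(r := q r - 1)) i - u) \<le> a \<and>
        (\<Sum>i\<in>X. min (q i) u) + 0 \<le> (\<Sum>i\<in>X'. min ((q(r := q r - 1)) i) u) + 0"
    proof (cases "r \<in> X")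
      case True
      have c: "(\<Sum>i\<in>X. (q(r := q r - 1)) i - u) + (q r - u) = (\<Sum>i\<in>X. q i - u) + (q r - 1 - u)"
        using sum_upd_eq[OF f, of "\<lambda>x. x - u" q r "q r - 1"] True by simp
      have v: "(\<Sum>i\<in>X. min ((q(r := q r - 1)) i) u) + min (q r) u = (\<Sum>i\<in>X. min (q i) u) + min (q r - 1) u"
        using sum_upd_eq[OF f, of "\<lambda>x. min x u" q r "q r - 1"] True by simp
      have "(\<Sum>i\<in>X. (q(r := q r - 1)) i - u) \<le> a" using c X(2) assms(1) by linarith
      moreover have "(\<Sum>i\<in>X. min (q i) u) \<le> (\<Sum>i\<in>X. min ((q(r := q r - 1)) i) u)"
        using v assms(1) by linarith
      ultimately show ?thesis using X(1) by auto
    next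
      case False
      show ?thesis
      proof (cases "\<exists>j\<in>X. q j \<ge> q r")
        case True
        then obtain j where j: "j \<in> X" "q j \<ge> q r" by blast
        let ?Y = "insert r (X - {j})"
        have Y: "?Y \<subseteq> {1..k}" using X(1) assms(2) by blast
        have rn: "r \<notin> X - {j}" using False by blast
        have fj: "finite (X - {j})" using f by simp
        have c1: "(\<Sum>i\<in>?Y. (q(r := q r - 1)) i - u) = (q r - 1 - u) + (\<Sum>i\<in>X-{j}. (q(r := q r - 1)) i - u)"
          using rn fj by simp
        have c2: "(\<Sum>i\<in>X-{j}. (q(r := q r - 1)) i - u) = (\<Sum>i\<in>X-{j}. q i - u)"
          by (rule sum_notin_upd[OF rn])
        have c3: "(\<Sum>i\<in>X. q i - u) = (q j - u) + (\<Sum>i\<in>X-{j}. q i - u)"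
          using sum.remove[OF f j(1), of "\<lambda>i. q i - u"] by simp
        have v1: "(\<Sum>i\<in>?Y. min ((q(r := q r - 1)) i) u) = min (q r - 1) u + (\<Sum>i\<in>X-{j}. min ((q(r := q r - 1)) i) u)"
          using rn fj by simp
        have v2: "(\<Sum>i\<in>X-{j}. min ((q(r := q r - 1)) i) u) = (\<Sum>i\<in>X-{j}. min (q i) u)"
          by (rule sum_notin_upd[OF rn])
        have v3: "(\<Sum>i\<in>X. min (q i) u) = min (q j) u + (\<Sum>i\<in>X-{j}. min (q i) u)"
          using sum.remove[OF f j(1), of "\<lambda>i. min (q i) u"] by simp
        have "(\<Sum>i\<in>?Y. (q(r := q r - 1)) i - u) \<le> a" using c1 c2 c3 X(2) j(2) assms(1) by linarith
        moreover have "(\<Sum>i\<in>X. min (q i) u) \<le> (\<Sum>i\<in>?Y. min ((q(r := q r - 1)) i) u)"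
          using v1 v2 v3 j(2) assms(1) by simp
        ultimately show ?thesis using Y by (intro exI[of _ ?Y]) auto
      next
        case False2: False
        have sub: "X \<subseteq> {i\<in>{1..k}. q i < q r}" using X(1) False2 by auto
        have "(\<Sum>i\<in>X. q i - u) \<le> (\<Sum>i\<in>{i\<in>{1..k}. q i < q r}. q i - u)"
          by (rule sum_mono2[OF _ sub]) auto
        moreover have "(\<Sum>i\<in>X. (q(r := q r - 1)) i - u) = (\<Sum>i\<in>X. q i - u)"
          by (rule sum_notin_upd[OF False])
        moreover have "(\<Sum>i\<in>X. min ((q(r := q r - 1)) i) u) = (\<Sum>i\<in>X. min (q i) u)"
          by (rule sum_notin_upd[OF False])
        ultimately show ?thesis using X(1) assms(3) by (intro exI[of _ X]) auto
      qed
    qed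
  qed
  then show ?thesis by simp
qed

lemma N1: assumes "1 \<le> q r" "r \<in> {1..k}"
  shows "need k u q (Suc j) \<le> need k u (q(r := q r - 1)) j + (if q r > u then 1 else 0)"
proof -
  let ?a = "need k u (q(r := q r - 1)) j"
  have s: "j \<le> ?a + Gk k u (q(r := q r - 1)) ?a" by (rule need_spec)
  show ?thesis
  proof (cases "q r > u")
    case True
    have "Gk k u (q(r := q r - 1)) ?a \<le> Gk k u q (Suc ?a)" by (rule G1[where q=q and r=r, OF True])
    then have "Suc j \<le> Suc ?a + Gk k u q (Suc ?a)" using s by linarith
    then show ?thesis using True need_le by simp
  next
    case False
    have "Gk k u (q(r := q r - 1)) ?a + 1 \<le> Gk k u q ?a" by (rule G2) (use False assms in auto)
    then have "Suc j \<le> ?a + Gk k u q ?a" using s by linarith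
    then show ?thesis using False need_le by simp
  qed
qed

lemma N23: "need k u (q(r := q r - 1)) j \<le> need k u q (Suc j)"
proof -
  let ?a = "need k u q (Suc j)"
  have s: "Suc j \<le> ?a + Gk k u q ?a" by (rule need_spec)
  have "Gk k u q ?a \<le> Gk k u (q(r := q r - 1)) ?a + 1"
  proof (cases "q r > u")
    case True then show ?thesis using G4[where q=q and r=r and k=k and a="?a", OF True] by linarith
  next
    case False then show ?thesis using G3[of q r u k ?a] by simp
  qed
  then have "j \<le> ?a + Gk k u (q(r := q r - 1)) ?a" using s by linarith
  then show ?thesis by (rule need_le)
qed

lemma N5: assumes "q r > u" "r \<in> {1..k}" "(\<Sum>i\<in>{i\<in>{1..k}. q i < q r}. q i - u) < need k u q (Suc j)"
  shows "need k u (q(r := q r - 1)) j + 1 \<le> need k u q (Suc j)"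
proof -
  obtain b where b: "need k u q (Suc j) = Suc b" using assms(3) by (cases "need k u q (Suc j)") auto
  have P: "(\<Sum>i\<in>{i\<in>{1..k}. q i < q r}. q i - u) \<le> b" using assms(3) b by simp
  have s: "Suc j \<le> Suc b + Gk k u q (Suc b)" using need_spec[of "Suc j" k u q] b by simp
  have "Gk k u q (Suc b) \<le> Gk k u (q(r := q r - 1)) b" by (rule G5[OF assms(1,2) P])
  then have "j \<le> b + Gk k u (q(r := q r - 1)) b" using s by linarith
  then have "need k u (q(r := q r - 1)) j \<le> b" by (rule need_le)
  then show ?thesis using b by simp
qed

lemma N6: assumes "u0 \<le> u" shows "need k u q j \<le> need k u0 q j"
proof -
  let ?a = "need k u0 q j"
  have "j \<le> ?a + Gk k u0 q ?a" by (rule need_spec)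
  moreover have "Gk k u0 q ?a \<le> Gk k u q ?a" by (rule G6[OF assms])
  ultimately have "j \<le> ?a + Gk k u q ?a" by linarith
  then show ?thesis by (rule need_le)
qed

definition sorted_on :: "nat \<Rightarrow> (nat \<Rightarrow> nat) \<Rightarrow> bool" where
  "sorted_on k q = (\<forall>i j. 1 \<le> i \<longrightarrow> i \<le> j \<longrightarrow> j \<le> k \<longrightarrow> q i \<le> q j)"

lemma lemK:
  assumes so: "sorted_on k q" and h: "1 \<le> h" "h \<le> k" "q h > u" and X: "X \<subseteq> {1..k}"
    and lt: "(\<Sum>i\<in>X. q i - u) < (\<Sum>i=1..h. q i - u)"
  shows "(\<Sum>i\<in>X. min (q i) u) + u \<le> (\<Sum>i=1..h. min (q i) u)"
proof -
  define J where "J = {1..h}"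
  define X1 where "X1 = X \<inter> J"
  define X2 where "X2 = X - J"
  define M where "M = J - X"
  define Mp where "Mp = {i\<in>M. q i > u}"
  have fX: "finite X" using X by (rule fin_sub)
  have fJ: "finite J" unfolding J_def by simp
  have fM: "finite M" unfolding M_def using fJ by simp
  have fX2: "finite X2" unfolding X2_def using fX by simp
  have fMp: "finite Mp" unfolding Mp_def using fM by simp
  have JX: "J \<inter> X = X1" unfolding X1_def by blast
  have a1: "(\<Sum>i\<in>X. q i - u) = (\<Sum>i\<in>X1. q i - u) + (\<Sum>i\<in>X2. q i - u)"
    unfolding X1_def X2_def by (rule sum.Int_Diff[OF fX])
  have a2: "(\<Sum>i\<in>J. q i - u) = (\<Sum>i\<in>X1. q i - u) + (\<Sum>i\<in>M. q i - u)"
    unfolding M_def JX[symmetric] by (rule sum.Int_Diff[OF fJ])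
  have b1: "(\<Sum>i\<in>X. min (q i) u) = (\<Sum>i\<in>X1. min (q i) u) + (\<Sum>i\<in>X2. min (q i) u)"
    unfolding X1_def X2_def by (rule sum.Int_Diff[OF fX])
  have b2: "(\<Sum>i\<in>J. min (q i) u) = (\<Sum>i\<in>X1. min (q i) u) + (\<Sum>i\<in>M. min (q i) u)"
    unfolding M_def JX[symmetric] by (rule sum.Int_Diff[OF fJ])
  have c1: "(\<Sum>i\<in>M. q i - u) = (\<Sum>i\<in>Mp. q i - u)"
    unfolding Mp_def by (rule sum.mono_neutral_right[OF fM]) auto
  have c2: "(\<Sum>i\<in>Mp. q i - u) \<le> card Mp * (q h - u)"
  proof -
    have "\<forall>i\<in>Mp. q i - u \<le> q h - u"
    proof
      fix i assume "i \<in> Mp"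
      then have "1 \<le> i" "i \<le> h" unfolding Mp_def M_def J_def by auto
      then have "q i \<le> q h" using so h unfolding sorted_on_def by blast
      then show "q i - u \<le> q h - u" by simp
    qed
    then show ?thesis using sum_bounded_above[of Mp "\<lambda>i. q i - u" "q h - u"] by simp
  qed
  have c3: "card X2 * (q h - u) \<le> (\<Sum>i\<in>X2. q i - u)"
  proof -
    have "\<forall>i\<in>X2. q h - u \<le> q i - u"
    proof
      fix i assume "i \<in> X2"
      then have "h \<le> i" "i \<le> k" using X unfolding X2_def J_def by auto
      then have "q h \<le> q i" using so h unfolding sorted_on_def by blast
      then show "q h - u \<le> q i - u" by simp
    qed
    then show ?thesis using sum_bounded_below[of X2 "q h - u" "\<lambda>i. q i - u"] by simp
  qed
  have "card X2 * (q h - u) < card Mp * (q h - u)"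
    using a1 a2 c1 c2 c3 lt unfolding J_def by linarith
  then have cc: "card X2 + 1 \<le> card Mp" by (metis Suc_eq_plus1 Suc_leI mult_less_cancel2)
  have d1: "(\<Sum>i\<in>X2. min (q i) u) \<le> card X2 * u"
    using sum_bounded_above[of X2 "\<lambda>i. min (q i) u" u] by simp
  have d2: "(\<Sum>i\<in>Mp. min (q i) u) = card Mp * u"
  proof -
    have "(\<Sum>i\<in>Mp. min (q i) u) = (\<Sum>i\<in>Mp. u)" by (rule sum.cong) (auto simp: Mp_def)
    then show ?thesis by simp
  qed
  have d3: "(\<Sum>i\<in>Mp. min (q i) u) \<le> (\<Sum>i\<in>M. min (q i) u)"
    by (rule sum_mono2[OF fM]) (auto simp: Mp_def)
  have "(card X2 + 1) * u \<le> card Mp * u" using cc by (rule mult_le_mono1)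
  then show ?thesis using b1 b2 d1 d2 d3 unfolding J_def by (simp add: algebra_simps)
qed

lemma GK: assumes "sorted_on k q" "1 \<le> h" "h \<le> k" "q h > u" "a < (\<Sum>i=1..h. q i - u)"
  shows "Gk k u q a + u \<le> (\<Sum>i=1..h. min (q i) u)"
proof -
  obtain X where X: "X \<subseteq> {1..k}" "(\<Sum>i\<in>X. q i - u) \<le> a" "Gk k u q a = (\<Sum>i\<in>X. min (q i) u)"
    using Gk_ex[where k=k and u=u and q=q and a=a] by (elim exE conjE)
  have "(\<Sum>i\<in>X. q i - u) < (\<Sum>i=1..h. q i - u)" using X(2) assms(5) by linarith
  from lemK[OF assms(1-4) X(1) this] X(3) show ?thesis by simp
qed

lemma PhiLB:
  assumes "1 \<le> q r" "r \<in> {1..k}" "1 \<le> N"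
  shows "Phi k u q isL N \<le> (if isL 1 \<and> q r > u then 1 else 0) + Phi k u (q(r := q r - 1)) (\<lambda>i. isL (Suc i)) (N - 1)"
proof -
  obtain j where j: "j \<le> N" "Phi k u q isL N = int (need k u q j) - int (Hc isL j)"
    using Phi_ex by blast
  have nn: "0 \<le> Phi k u (q(r := q r - 1)) (\<lambda>i. isL (Suc i)) (N - 1)" by (rule Phi_nonneg)
  show ?thesis
  proof (cases j)
    case 0
    then show ?thesis using j nn by simp
  next
    case (Suc j')
    have n1: "need k u q (Suc j') \<le> need k u (q(r := q r - 1)) j' + (if q r > u then 1 else 0)"
      by (rule N1[where q=q and r=r and k=k and u=u and j=j', OF assms(1,2)])
    have h1: "Hc isL (Suc j') = (if isL 1 then 0 else 1) + Hc (\<lambda>i. isL (Suc i)) j'" by (rule Hc_shift)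
    have p: "int (need k u (q(r := q r - 1)) j') - int (Hc (\<lambda>i. isL (Suc i)) j') \<le> Phi k u (q(r := q r - 1)) (\<lambda>i. isL (Suc i)) (N - 1)"
      by (rule Phi_ge) (use j Suc in auto)
    show ?thesis using j(2) Suc n1 h1 p by (auto split: if_splits)
  qed
qed

definition cond :: "nat \<Rightarrow> (nat \<Rightarrow> nat) \<Rightarrow> (nat \<Rightarrow> real) \<Rightarrow> nat \<Rightarrow> bool" where
  "cond k ms S g = (cap0 ms g \<noteq> cap0 ms (g - 1) \<and> (\<exists>h \<in> {g..k}. ta_test ms S g h))"

lemma TL1: "ta_loop k ms S g = 0 \<or> (1 \<le> ta_loop k ms S g \<and> ta_loop k ms S g \<le> g \<and> cond k ms S (ta_loop k ms S g)
   \<and> (\<forall>g'. ta_loop k ms S g < g' \<and> g' \<le> g \<longrightarrow> \<not> cond k ms S g'))"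
proof (induction g)
  case 0 then show ?case by simp
next
  case (Suc g)
  show ?case
  proof (cases "cond k ms S (Suc g)")
    case True
    then show ?thesis unfolding cond_def by auto
  next
    case False
    then have e: "ta_loop k ms S (Suc g) = ta_loop k ms S g" unfolding cond_def by auto
    show ?thesis unfolding e using Suc.IH False le_Suc_eq by auto
  qed
qed

lemma TL2: "1 \<le> g0 \<Longrightarrow> g0 \<le> g \<Longrightarrow> cond k ms S g0 \<Longrightarrow> ta_loop k ms S g \<noteq> 0"
proof (induction g)
  case 0 then show ?case by simp
next
  case (Suc g)
  show ?case
  proof (cases "cond k ms S (Suc g)")
    case True
    then show ?thesis unfolding cond_def by auto
  next
    case False
    then have e: "ta_loop k ms S (Suc g) = ta_loop k ms S g" unfolding cond_def by auto
    have "g0 \<le> g" using Suc.prems False by (cases "g0 = Suc g") auto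
    then show ?thesis unfolding e using Suc by auto
  qed
qed

lemma cap0_pos[simp]: "1 \<le> i \<Longrightarrow> cap0 q i = q i"
  by (simp add: cap0_def)

lemma cap0_0[simp]: "cap0 q 0 = 0"
  by (simp add: cap0_def)

lemma sum_pos_ex: "finite A \<Longrightarrow> (0::nat) < (\<Sum>i\<in>A. f i) \<Longrightarrow> \<exists>i\<in>A. 0 < f i"
  by (metis not_gr0 sum.neutral)

lemma TA_props:
  assumes so: "sorted_on k q" and pos: "1 \<le> (\<Sum>i=1..k. q i)"
  shows "1 \<le> TA k q S \<and> TA k q S \<le> k \<and> cond k q S (TA k q S) \<and>
         (\<forall>g'. TA k q S < g' \<and> g' \<le> k \<longrightarrow> \<not> cond k q S g')"
proof -
  obtain i where i: "i \<in> {1..k}" "0 < q i" using sum_pos_ex[of "{1..k}" q] pos by auto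
  define g0 where "g0 = (LEAST g. 1 \<le> g \<and> 0 < q g)"
  have g0: "1 \<le> g0" "0 < q g0" unfolding g0_def by (rule LeastI2[of _ i], use i in auto)+
  have g0le: "g0 \<le> i" unfolding g0_def by (rule Least_le) (use i in auto)
  have w0: "cap0 q (g0 - 1) = 0"
  proof (cases "g0 = 1")
    case True then show ?thesis by simp
  next
    case False
    have "g0 - 1 < g0" using g0(1) by simp
    then have "\<not> (1 \<le> g0 - 1 \<and> 0 < q (g0 - 1))" unfolding g0_def by (rule not_less_Least)
    then show ?thesis using False g0(1) by simp
  qed
  have t: "ta_test q S g0 k" unfolding ta_test_def Let_def w0 by simp
  have c0: "cond k q S g0" unfolding cond_def using w0 g0 t g0le i by auto
  have ne: "TA k q S \<noteq> 0" unfolding TA_def by (rule TL2[OF g0(1) _ c0]) (use g0le i in auto)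
  then show ?thesis using TL1[of k q S k] unfolding TA_def by auto
qed

definition ZLf :: "(nat \<Rightarrow> nat) \<Rightarrow> nat \<Rightarrow> nat \<Rightarrow> nat" where
  "ZLf q g h = (\<Sum>i = 1..h - 1. min (cap0 q i) (cap0 q (g - 1)))"
definition ZHf :: "(nat \<Rightarrow> nat) \<Rightarrow> nat \<Rightarrow> nat \<Rightarrow> nat" where
  "ZHf q g h = (\<Sum>i = g..h. cap0 q i - cap0 q (g - 1))"

lemma test_eq: "ta_test q S g h = (card {i \<in> {1..ZLf q g h + ZHf q g h}. S i > S 1} \<ge> ZLf q g h)"
  unfolding ta_test_def ZLf_def ZHf_def Let_def by simp

definition Lc :: "(nat \<Rightarrow> bool) \<Rightarrow> nat \<Rightarrow> nat" where
  "Lc isL j = (\<Sum>i=1..j. if isL i then 1 else 0)"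

lemma Lc_Hc: "Lc isL j + Hc isL j = j"
proof -
  have "Lc isL j + Hc isL j = (\<Sum>i=1..j. (if isL i then 1 else 0) + (if isL i then 0 else 1))"
    unfolding Lc_def Hc_def by (simp add: sum.distrib)
  also have "\<dots> = (\<Sum>i=1..j. (1::nat))" by (rule sum.cong) auto
  finally show ?thesis by simp
qed

lemma Lc_card: "card {i\<in>{1..j}. isL i} = Lc isL j"
proof -
  have "card {i\<in>{1..j}. isL i} = (\<Sum>i\<in>{i\<in>{1..j}. isL i}. (1::nat))" by simp
  also have "\<dots> = (\<Sum>i=1..j. if isL i then 1 else 0)" by (rule sum.inter_filter) simp
  finally show ?thesis unfolding Lc_def .
qed

lemma Lc_mono: "j \<le> j' \<Longrightarrow> Lc isL j \<le> Lc isL j'"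
  unfolding Lc_def by (rule sum_mono2) auto

lemma Hc_1: "\<not> isL 1 \<Longrightarrow> 1 \<le> j \<Longrightarrow> 1 \<le> Hc isL j"
proof -
  assume a: "\<not> isL 1" "1 \<le> j"
  have "Hc isL 1 = 1" using a(1) by (simp add: Hc_def)
  then show ?thesis using Hc_mono[OF a(2), of isL] by simp
qed

lemma card_gt:
  assumes vals: "\<forall>i\<in>{1..N}. S i = H \<or> S i = L" and HL: "(H::real) < L" and Z: "Z \<le> N" and N: "1 \<le> N"
  shows "S 1 = L \<Longrightarrow> card {i\<in>{1..Z}. S i > S 1} = 0"
    and "S 1 \<noteq> L \<Longrightarrow> card {i\<in>{1..Z}. S i > S 1} = Z - Hc (\<lambda>i. S i = L) Z"
proof -
  assume s1: "S 1 = L"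
  have "{i\<in>{1..Z}. S i > S 1} = {}"
  proof (rule ccontr)
    assume "{i\<in>{1..Z}. S i > S 1} \<noteq> {}"
    then obtain i where i: "i \<in> {1..Z}" "S i > S 1" by blast
    then have "i \<in> {1..N}" using Z by auto
    then have "S i = H \<or> S i = L" using vals by blast
    then show False using i s1 HL by auto
  qed
  then show "card {i\<in>{1..Z}. S i > S 1} = 0" by simp
next
  assume s1: "S 1 \<noteq> L"
  then have sH: "S 1 = H" using vals N by auto
  have "{i\<in>{1..Z}. S i > S 1} = {i\<in>{1..Z}. S i = L}"
  proof (intro Collect_cong conj_cong refl)
    fix i assume "i \<in> {1..Z}"
    then have "i \<in> {1..N}" using Z by auto
    then have "S i = H \<or> S i = L" using vals by blast
    then show "(S i > S 1) = (S i = L)" using sH HL by auto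
  qed
  then show "card {i\<in>{1..Z}. S i > S 1} = Z - Hc (\<lambda>i. S i = L) Z"
    using Lc_card[of Z "\<lambda>i. S i = L"] Lc_Hc[of "\<lambda>i. S i = L" Z] by simp
qed

lemma sum_split:
  assumes "1 \<le> g" "g \<le> Suc (h::nat)"
  shows "(\<Sum>i=1..h. f i) = (\<Sum>i=1..g-1. f i) + (\<Sum>i=g..h. (f i :: nat))"
proof -
  have e: "{1..h} = {1..g-1} \<union> {g..h}" using assms by auto
  have d: "{1..g-1} \<inter> {g..h} = {}" by auto
  show ?thesis unfolding e by (rule sum.union_disjoint) (use d in auto)
qed

lemma sum_last: assumes "1 \<le> (h::nat)" shows "(\<Sum>i=1..h. f i) = (\<Sum>i=1..h-1. f i) + (f h :: nat)"
proof -
  obtain h' where h: "h = Suc h'" using assms by (cases h) auto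
  show ?thesis unfolding h by (simp add: sum.cl_ivl_Suc)
qed

lemma Z_le:
  assumes "1 \<le> g" "g \<le> h"
  shows "ZLf q g h + ZHf q g h \<le> (\<Sum>i=1..h. q i)"
proof -
  define w where "w = cap0 q (g - 1)"
  have zl: "ZLf q g h = (\<Sum>i=1..h-1. min (q i) w)" unfolding ZLf_def w_def by (rule sum.cong) auto
  have zh: "ZHf q g h = (\<Sum>i=g..h. q i - w)" unfolding ZHf_def w_def by (rule sum.cong) (use assms in auto)
  have "ZHf q g h \<le> (\<Sum>i=1..h. q i - w)" unfolding zh by (rule sum_mono2) (use assms in auto)
  also have "\<dots> = (\<Sum>i=1..h-1. q i - w) + (q h - w)" by (rule sum_last) (use assms in auto)
  finally have a: "ZHf q g h \<le> (\<Sum>i=1..h-1. q i - w) + (q h - w)" .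
  have "(\<Sum>i=1..h-1. min (q i) w) + (\<Sum>i=1..h-1. q i - w) = (\<Sum>i=1..h-1. min (q i) w + (q i - w))"
    by (simp add: sum.distrib)
  also have "\<dots> = (\<Sum>i=1..h-1. q i)" by (rule sum.cong) auto
  finally have b: "(\<Sum>i=1..h-1. min (q i) w) + (\<Sum>i=1..h-1. q i - w) = (\<Sum>i=1..h-1. q i)" .
  have c: "(\<Sum>i=1..h. q i) = (\<Sum>i=1..h-1. q i) + q h" by (rule sum_last) (use assms in auto)
  show ?thesis using a b c zl by linarith
qed

lemma sorted_le: "sorted_on k q \<Longrightarrow> 1 \<le> i \<Longrightarrow> i \<le> j \<Longrightarrow> j \<le> k \<Longrightarrow> q i \<le> q j"
  unfolding sorted_on_def by blast

lemma below_w: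
  assumes so: "sorted_on k q" and g: "g \<le> k" and i: "1 \<le> i" "i < g"
  shows "q i \<le> cap0 q (g - 1)"
proof -
  have "1 \<le> g - 1" using i by simp
  then show ?thesis using sorted_le[OF so i(1), of "g - 1"] i g by simp
qed

lemma claimU:
  assumes so: "sorted_on k q" and N: "N = (\<Sum>i=1..k. q i)" and g: "1 \<le> g" "g \<le> k"
    and wd: "w = cap0 q (g-1)"
    and fail: "\<forall>h\<in>{g..k}. ZHf q g h < Hc isL (ZLf q g h + ZHf q g h)"
    and nL: "\<not> isL 1" and j: "1 \<le> j" "j \<le> N"
  shows "need k w q j < Hc isL j"
proof -
  have Hj: "1 \<le> Hc isL j" by (rule Hc_1[where isL=isL and j=j, OF nL j(1)])
  define b where "b = Hc isL j - 1"
  have Hjb: "Hc isL j = Suc b" using Hj b_def by simp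
  define ZHs where "ZHs h = (\<Sum>i=1..h. q i - w)" for h
  have wle: "\<And>i. 1 \<le> i \<Longrightarrow> i < g \<Longrightarrow> q i \<le> w" using below_w[OF so g(2)] wd by blast
  have LH: "Lc isL j + Hc isL j = j" by (rule Lc_Hc)
  have "j \<le> b + Gk k w q b"
  proof (cases "\<exists>h. 1 \<le> h \<and> h \<le> k \<and> b < ZHs h")
    case True
    define h0 where "h0 = (LEAST h. 1 \<le> h \<and> h \<le> k \<and> b < ZHs h)"
    have h0: "1 \<le> h0 \<and> h0 \<le> k \<and> b < ZHs h0" unfolding h0_def using True by (rule LeastI_ex)
    have prev: "ZHs (h0 - 1) \<le> b"
    proof (cases "h0 - 1 = 0")
      case True then show ?thesis by (simp add: ZHs_def)
    next
      case False
      have "h0 - 1 < h0" using h0 by simp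
      then have "\<not> (1 \<le> h0 - 1 \<and> h0 - 1 \<le> k \<and> b < ZHs (h0 - 1))" unfolding h0_def by (rule not_less_Least)
      then show ?thesis using False h0 by auto
    qed
    have gh0: "g \<le> h0"
    proof (rule ccontr)
      assume "\<not> g \<le> h0"
      then have "ZHs h0 = 0" unfolding ZHs_def by (intro sum.neutral) (use wle in auto)
      then show False using h0 by simp
    qed
    have zh: "ZHf q g h0 = ZHs h0"
    proof -
      have "ZHs h0 = (\<Sum>i=1..g-1. q i - w) + (\<Sum>i=g..h0. q i - w)" unfolding ZHs_def
        by (rule sum_split) (use g gh0 in auto)
      moreover have "(\<Sum>i=1..g-1. q i - w) = 0" by (intro sum.neutral) (use wle in auto)
      moreover have "ZHf q g h0 = (\<Sum>i=g..h0. q i - w)" unfolding ZHf_def wd by (rule sum.cong) (use g in auto)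
      ultimately show ?thesis by simp
    qed
    have zl: "ZLf q g h0 = (\<Sum>i=1..h0-1. min (q i) w)" unfolding ZLf_def wd by (rule sum.cong) auto
    have G: "ZLf q g h0 \<le> Gk k w q b"
      unfolding zl by (rule Gk_ge) (use h0 prev in \<open>auto simp: ZHs_def\<close>)
    define Z where "Z = ZLf q g h0 + ZHf q g h0"
    have f: "ZHf q g h0 < Hc isL Z" using fail gh0 h0 unfolding Z_def by auto
    have LZ: "Lc isL Z + Hc isL Z = Z" by (rule Lc_Hc)
    show ?thesis
    proof (cases "j \<le> Z")
      case True
      have "Lc isL j \<le> Lc isL Z" by (rule Lc_mono[OF True])
      then show ?thesis using LZ f G LH Hjb Z_def by linarith
    next
      case False
      have "Hc isL Z \<le> Hc isL j" by (rule Hc_mono) (use False in auto)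
      then show ?thesis using f zh h0 Hjb by linarith
    qed
  next
    case False
    have k1: "1 \<le> k" using g by simp
    have zk: "ZHs k \<le> b" using False k1 by auto
    have G: "(\<Sum>i=1..k. min (q i) w) \<le> Gk k w q b"
      by (rule Gk_ge) (use zk in \<open>auto simp: ZHs_def\<close>)
    have "(\<Sum>i=1..k. min (q i) w) + ZHs k = (\<Sum>i=1..k. min (q i) w + (q i - w))"
      unfolding ZHs_def by (simp add: sum.distrib)
    also have "\<dots> = N" unfolding N by (rule sum.cong) auto
    finally show ?thesis using G zk j(2) by linarith
  qed
  then have "need k w q j \<le> b" by (rule need_le)
  then show ?thesis using Hjb by simp
qed

lemma claimC:
  assumes so: "sorted_on k q" and g: "2 \<le> g" "g \<le> k"
    and wd: "w = q (g-1)" "u < w" "w < q g" and h: "g \<le> h" "h \<le> k"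
    and pass: "Hc isL (ZLf q g h + ZHf q g h) \<le> ZHf q g h"
  shows "int (\<Sum>i=1..g-1. q i - u) \<le> int (need k u q (ZLf q g h + ZHf q g h)) - int (Hc isL (ZLf q g h + ZHf q g h))"
proof -
  define Z where "Z = ZLf q g h + ZHf q g h"
  define P where "P = (\<Sum>i=1..g-1. q i - u)"
  define d where "d = h - g"
  have hd: "h = g + d" using h d_def by simp
  have wle: "\<And>i. 1 \<le> i \<Longrightarrow> i < g \<Longrightarrow> q i \<le> w" using below_w[OF so g(2)] wd g by simp
  have wgt: "\<And>i. g \<le> i \<Longrightarrow> i \<le> k \<Longrightarrow> q g \<le> q i" using sorted_le[OF so] g by simp
  have zh: "ZHf q g h = (\<Sum>i=g..h. q i - w)" unfolding ZHf_def by (rule sum.cong) (use g wd in auto)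
  have zl0: "ZLf q g h = (\<Sum>i=1..h-1. min (q i) w)" unfolding ZLf_def by (rule sum.cong) (use g wd in auto)
  have zl: "ZLf q g h = (\<Sum>i=1..g-1. q i) + d * w"
  proof -
    have "(\<Sum>i=1..h-1. min (q i) w) = (\<Sum>i=1..g-1. min (q i) w) + (\<Sum>i=g..h-1. min (q i) w)"
      by (rule sum_split) (use g h in auto)
    moreover have "(\<Sum>i=1..g-1. min (q i) w) = (\<Sum>i=1..g-1. q i)" by (rule sum.cong) (use wle in auto)
    moreover have "(\<Sum>i=g..h-1. min (q i) w) = (\<Sum>i=g..h-1. w)"
    proof (rule sum.cong)
      fix i assume "i \<in> {g..h-1}"
      then have "q g \<le> q i" using wgt h by auto
      then show "min (q i) w = w" using wd by simp
    qed simp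
    moreover have "(\<Sum>i=g..h-1. w) = d * w" using hd g by simp
    ultimately show ?thesis using zl0 by simp
  qed
  have s1: "(\<Sum>i=1..h. q i - u) = P + (\<Sum>i=g..h. q i - u)" unfolding P_def
    by (rule sum_split) (use g h in auto)
  have s2: "(\<Sum>i=g..h. q i - u) \<ge> (\<Sum>i=g..h. (q i - w) + 1)"
  proof (rule sum_mono)
    fix i assume "i \<in> {g..h}"
    then have "q g \<le> q i" using wgt h by auto
    then show "(q i - w) + 1 \<le> q i - u" using wd by linarith
  qed
  have s3a: "(\<Sum>i=g..h. (q i - w) + 1) = (\<Sum>i=g..h. q i - w) + (\<Sum>i=g..h. (1::nat))" by (rule sum.distrib)
  have s3b: "(\<Sum>i=g..h. (1::nat)) = Suc d" using hd by simp
  have s3: "(\<Sum>i=g..h. (q i - w) + 1) = ZHf q g h + Suc d" unfolding zh s3a s3b ..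
  have m1: "(\<Sum>i=1..h. min (q i) u) = (\<Sum>i=1..g-1. min (q i) u) + (\<Sum>i=g..h. min (q i) u)"
    by (rule sum_split) (use g h in auto)
  have m2: "(\<Sum>i=g..h. min (q i) u) = (\<Sum>i=g..h. u)"
  proof (rule sum.cong)
    fix i assume "i \<in> {g..h}"
    then have "q g \<le> q i" using wgt h by auto
    then show "min (q i) u = u" using wd by simp
  qed simp
  have m3: "(\<Sum>i=g..h. u) = Suc d * u" using hd by simp
  have m4: "(\<Sum>i=1..g-1. min (q i) u) + P = (\<Sum>i=1..g-1. q i)"
  proof -
    have "(\<Sum>i=1..g-1. min (q i) u) + P = (\<Sum>i=1..g-1. min (q i) u + (q i - u))"
      unfolding P_def by (simp add: sum.distrib)
    also have "\<dots> = (\<Sum>i=1..g-1. q i)" by (rule sum.cong) auto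
    finally show ?thesis .
  qed
  have dw: "d * u \<le> d * w" using wd by simp
  have key: "P + ZHf q g h \<le> need k u q Z"
  proof (rule ccontr)
    assume "\<not> P + ZHf q g h \<le> need k u q Z"
    then have a: "need k u q Z < P + ZHf q g h" by simp
    have qh: "u < q h" using wgt[of h] h wd by simp
    have lt: "need k u q Z < (\<Sum>i=1..h. q i - u)" using a s1 s2 s3 by linarith
    have GK': "Gk k u q (need k u q Z) + u \<le> (\<Sum>i=1..h. min (q i) u)"
      by (rule GK[OF so _ h(2) qh lt]) (use g h in auto)
    have sp: "Z \<le> need k u q Z + Gk k u q (need k u q Z)" by (rule need_spec)
    show False using a GK' sp m1 m2 m3 m4 zl dw Z_def by (simp add: algebra_simps)
  qed
  show ?thesis using key pass unfolding Z_def[symmetric] P_def[symmetric] by linarith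
qed

lemma ZN: assumes "1 \<le> g" "g \<le> h" "h \<le> k" "N = (\<Sum>i=1..k. q i)"
  shows "ZLf q g h + ZHf q g h \<le> N"
proof -
  have "(\<Sum>i=1..h. q i) \<le> (\<Sum>i=1..k. q i)" by (rule sum_mono2) (use assms in auto)
  then show ?thesis using Z_le[OF assms(1,2), of q] assms(4) by linarith
qed

lemma PhiUB:
  assumes so: "sorted_on k q" and N: "N = (\<Sum>i=1..k. q i)" "1 \<le> N"
    and vals: "\<forall>i\<in>{1..N}. S i = H \<or> S i = L" and HL: "(H::real) < L"
    and gdef: "g = TA k q S"
  shows "(if S 1 = L \<and> q g > u then 1 else 0) + Phi k u (q(g := q g - 1)) (\<lambda>i. S (Suc i) = L) (N - 1)
         \<le> Phi k u q (\<lambda>i. S i = L) N"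
proof -
  define isL where "isL = (\<lambda>i. S i = L)"
  have isLs: "(\<lambda>i. S (Suc i) = L) = (\<lambda>i. isL (Suc i))" unfolding isL_def ..
  have TP: "1 \<le> g \<and> g \<le> k \<and> cond k q S g \<and> (\<forall>g'. g < g' \<and> g' \<le> k \<longrightarrow> \<not> cond k q S g')"
    unfolding gdef by (rule TA_props[OF so]) (use N in auto)
  then have g1: "1 \<le> g" and gk: "g \<le> k" and cg: "cond k q S g"
    and nc: "\<And>g'. g < g' \<Longrightarrow> g' \<le> k \<Longrightarrow> \<not> cond k q S g'" by auto
  define w where "w = cap0 q (g - 1)"
  have wle: "w \<le> q g"
  proof (cases "g = 1")
    case True then show ?thesis by (simp add: w_def)
  next
    case False then show ?thesis unfolding w_def using sorted_le[OF so, of "g-1" g] g1 gk by simp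
  qed
  have wq: "w < q g" using cg wle g1 unfolding cond_def w_def by auto
  have bw: "\<And>i. 1 \<le> i \<Longrightarrow> i < g \<Longrightarrow> q i \<le> w" unfolding w_def using below_w[OF so gk] by blast
  have lessg: "\<And>i. i \<in> {1..k} \<Longrightarrow> q i < q g \<Longrightarrow> i < g"
  proof (rule ccontr)
    fix i assume "i \<in> {1..k}" "q i < q g" "\<not> i < g"
    then show False using sorted_le[OF so g1, of i] by auto
  qed
  obtain h where h: "h \<in> {g..k}" "ta_test q S g h" using cg unfolding cond_def by blast
  have ZhN: "ZLf q g h + ZHf q g h \<le> N" by (rule ZN) (use g1 h N in auto)
  obtain j' where j': "j' \<le> N - 1" "Phi k u (q(g := q g - 1)) (\<lambda>i. isL (Suc i)) (N - 1)
      = int (need k u (q(g := q g - 1)) j') - int (Hc (\<lambda>i. isL (Suc i)) j')"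
    using Phi_ex by blast
  define j where "j = Suc j'"
  have jN: "j \<le> N" "1 \<le> j" using j' N unfolding j_def by auto
  have hs: "Hc isL j = (if isL 1 then 0 else 1) + Hc (\<lambda>i. isL (Suc i)) j'" unfolding j_def by (rule Hc_shift)
  have vj: "int (need k u q j) - int (Hc isL j) \<le> Phi k u q isL N" by (rule Phi_ge[OF jN(1)])
  have n23: "need k u (q(g := q g - 1)) j' \<le> need k u q j" unfolding j_def by (rule N23)
  have nn: "0 \<le> Phi k u q isL N" by (rule Phi_nonneg)
  have n23i: "int (need k u (q(g := q g - 1)) j') \<le> int (need k u q j)" using n23 by simp
  define Pg where "Pg = (\<Sum>i\<in>{i\<in>{1..k}. q i < q g}. q i - u)"
  have "(if isL 1 \<and> q g > u then 1 else 0) + Phi k u (q(g := q g - 1)) (\<lambda>i. isL (Suc i)) (N - 1)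
         \<le> Phi k u q isL N"
  proof (cases "isL 1")
    case True
    then have s1: "S 1 = L" unfolding isL_def .
    have c0: "card {i\<in>{1..ZLf q g h + ZHf q g h}. S i > S 1} = 0" by (rule card_gt(1)[OF vals HL ZhN N(2) s1])
    have "ZLf q g h \<le> card {i\<in>{1..ZLf q g h + ZHf q g h}. S i > S 1}" using h(2) unfolding test_eq .
    then have zl0: "ZLf q g h = 0" unfolding c0 by simp
    have w0: "w = 0"
    proof (cases "g = 1")
      case True then show ?thesis by (simp add: w_def)
    next
      case False
      have fin: "finite {1..h-1}" by simp
      have mem: "g - 1 \<in> {1..h-1}" using False g1 h by auto
      have "\<forall>i\<in>{1..h-1}. min (cap0 q i) (cap0 q (g - 1)) = 0"
        using zl0 unfolding ZLf_def sum_eq_0_iff[OF fin] .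
      then have "min (cap0 q (g-1)) (cap0 q (g - 1)) = 0" using mem by (rule bspec)
      then show ?thesis unfolding w_def by simp
    qed
    have z: "q i = 0" if "1 \<le> i" "i < g" for i using bw[OF that] w0 by simp
    show ?thesis
    proof (cases "q g > u")
      case False
      have c: "(if isL 1 \<and> q g > u then 1 else 0) = (0::int)" using False by simp
      have hh: "Hc isL j = Hc (\<lambda>i. isL (Suc i)) j'" using hs True by simp
      show ?thesis unfolding c j'(2) using n23i hh vj by linarith
    next
      case qgu: True
      have Pg0: "Pg = 0" unfolding Pg_def by (rule sum.neutral) (use lessg z in auto)
      have G0: "Gk k u q 0 = 0"
      proof -
        obtain X where X: "X \<subseteq> {1..k}" "(\<Sum>i\<in>X. q i - u) \<le> 0" "Gk k u q 0 = (\<Sum>i\<in>X. min (q i) u)"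
          using Gk_ex[where k=k and u=u and q=q and a=0] by (elim exE conjE)
        have fX: "finite X" using X(1) by (rule fin_sub)
        have "(\<Sum>i\<in>X. q i - u) = 0" using X(2) by simp
        then have "\<forall>i\<in>X. q i - u = 0" unfolding sum_eq_0_iff[OF fX] .
        then have "\<forall>i\<in>X. q i = 0"
        proof (intro ballI)
          fix i assume "\<forall>i\<in>X. q i - u = 0" "i \<in> X"
          then have "q i \<le> u" "i \<in> {1..k}" using X(1) by auto
          then have "i < g" using sorted_le[OF so g1, of i] qgu by (cases "i < g") auto
          then show "q i = 0" using z \<open>i \<in> {1..k}\<close> by auto
        qed
        then show ?thesis using X(3) by simp
      qed
      have a1: "1 \<le> need k u q j"
      proof (rule ccontr)
        assume "\<not> 1 \<le> need k u q j"
        then have "need k u q j = 0" by simp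
        then show False using need_spec[of j k u q] G0 jN by simp
      qed
      have "need k u (q(g := q g - 1)) j' + 1 \<le> need k u q (Suc j')"
        by (rule N5[where q=q and r=g and u=u and k=k and j=j', OF qgu]) (use g1 gk Pg0 a1 in \<open>auto simp: Pg_def j_def\<close>)
      then have ni: "int (need k u (q(g := q g - 1)) j') + 1 \<le> int (need k u q j)" unfolding j_def by linarith
      have c: "(if isL 1 \<and> q g > u then 1 else 0) = (1::int)" using qgu True by simp
      have hh: "Hc isL j = Hc (\<lambda>i. isL (Suc i)) j'" using hs True by simp
      show ?thesis unfolding c j'(2) using ni hh vj by linarith
    qed
  next
    case False
    then have s1: "S 1 \<noteq> L" unfolding isL_def by simp
    have Hj: "1 \<le> Hc isL j" by (rule Hc_1[where isL=isL and j=j, OF False jN(2)])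
    have ce: "\<And>g' h'. 1 \<le> g' \<Longrightarrow> g' \<le> h' \<Longrightarrow> h' \<le> k \<Longrightarrow>
        ta_test q S g' h' = (Hc isL (ZLf q g' h' + ZHf q g' h') \<le> ZHf q g' h')"
    proof -
      fix g' h' assume a: "1 \<le> g'" "g' \<le> h'" "h' \<le> k"
      have ZN': "ZLf q g' h' + ZHf q g' h' \<le> N" by (rule ZN) (use a N in auto)
      have "card {i\<in>{1..ZLf q g' h' + ZHf q g' h'}. S i > S 1} = ZLf q g' h' + ZHf q g' h' - Hc isL (ZLf q g' h' + ZHf q g' h')"
        unfolding isL_def by (rule card_gt(2)[OF vals HL ZN' N(2) s1])
      moreover have "Hc isL (ZLf q g' h' + ZHf q g' h') \<le> ZLf q g' h' + ZHf q g' h'" by (rule Hc_le)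
      ultimately show "ta_test q S g' h' = (Hc isL (ZLf q g' h' + ZHf q g' h') \<le> ZHf q g' h')"
        unfolding test_eq by linarith
    qed
    show ?thesis
    proof (cases "q g > u")
      case False
      have alt: "need k u q j < Hc isL j"
      proof (cases "\<forall>i\<in>{1..k}. q i \<le> u")
        case True
        have "(\<Sum>i=1..k. min (q i) u) \<le> Gk k u q 0" by (rule Gk_ge) (use True in auto)
        moreover have "(\<Sum>i=1..k. min (q i) u) = N" unfolding N by (rule sum.cong) (use True in auto)
        ultimately have "j \<le> 0 + Gk k u q 0" using jN by simp
        then have "need k u q j \<le> 0" by (rule need_le)
        then show ?thesis using Hj by simp
      next
        case False2: False
        then have ex: "\<exists>i. 1 \<le> i \<and> i \<le> k \<and> u < q i" by auto
        define g' where "g' = (LEAST i. 1 \<le> i \<and> i \<le> k \<and> u < q i)"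
        have g': "1 \<le> g' \<and> g' \<le> k \<and> u < q g'" unfolding g'_def using ex by (rule LeastI_ex)
        have gg': "g < g'"
        proof (rule ccontr)
          assume "\<not> g < g'"
          then have "q g' \<le> q g" using sorted_le[OF so, of g' g] g' gk by simp
          then show False using g' False by simp
        qed
        define w' where "w' = cap0 q (g' - 1)"
        have w'u: "w' \<le> u"
        proof (cases "g' = 1")
          case True then show ?thesis by (simp add: w'_def)
        next
          case False
          have "g' - 1 < g'" using g' by simp
          then have "\<not> (1 \<le> g' - 1 \<and> g' - 1 \<le> k \<and> u < q (g' - 1))" unfolding g'_def by (rule not_less_Least)
          moreover have "1 \<le> g' - 1" "g' - 1 \<le> k" using False g' by auto
          ultimately have "q (g' - 1) \<le> u" by auto
          then show ?thesis unfolding w'_def using \<open>1 \<le> g' - 1\<close> by simp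
        qed
        have "\<not> cond k q S g'" by (rule nc[OF gg']) (use g' in auto)
        moreover have "cap0 q g' \<noteq> cap0 q (g' - 1)" using g' w'u unfolding w'_def by simp
        ultimately have "\<forall>h'\<in>{g'..k}. \<not> ta_test q S g' h'" unfolding cond_def by blast
        then have fail: "\<forall>h'\<in>{g'..k}. ZHf q g' h' < Hc isL (ZLf q g' h' + ZHf q g' h')"
          using ce g' by fastforce
        have "need k w' q j < Hc isL j"
          by (rule claimU[OF so N(1) _ _ w'_def fail \<open>\<not> isL 1\<close> jN(2,1)]) (use g' in auto)
        moreover have "need k u q j \<le> need k w' q j" by (rule N6[OF w'u])
        ultimately show ?thesis by linarith
      qed
      have c: "(if isL 1 \<and> q g > u then 1 else 0) = (0::int)" using False by simp
      have hh: "Hc isL j = 1 + Hc (\<lambda>i. isL (Suc i)) j'" using hs \<open>\<not> isL 1\<close> by simp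
      have alti: "int (need k u q j) < int (Hc isL j)" using alt by simp
      show ?thesis unfolding c j'(2) using n23i hh alti nn by linarith
    next
      case qgu: True
      show ?thesis
      proof (cases "Pg < need k u q j")
        case True
        have "need k u (q(g := q g - 1)) j' + 1 \<le> need k u q (Suc j')"
          by (rule N5[where q=q and r=g and u=u and k=k and j=j', OF qgu]) (use g1 gk True in \<open>auto simp: Pg_def j_def\<close>)
        then have ni: "int (need k u (q(g := q g - 1)) j') + 1 \<le> int (need k u q j)" unfolding j_def by linarith
        have c: "(if isL 1 \<and> q g > u then 1 else 0) = (0::int)" using False by simp
        have hh: "Hc isL j = 1 + Hc (\<lambda>i. isL (Suc i)) j'" using hs False by simp
        show ?thesis unfolding c j'(2) using ni hh vj by linarith
      next
        case le: False
        show ?thesis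
        proof (cases "need k u q j = 0")
          case True
          have c: "(if isL 1 \<and> q g > u then 1 else 0) = (0::int)" using False by simp
          have "int (need k u (q(g := q g - 1)) j') \<le> 0" using n23i True by simp
          then show ?thesis unfolding c j'(2) using nn by linarith
        next
          case nz: False
          then have "0 < Pg" using le by simp
          then obtain i where i: "i \<in> {i\<in>{1..k}. q i < q g}" "0 < q i - u"
            using sum_pos_ex[of "{i\<in>{1..k}. q i < q g}" "\<lambda>i. q i - u"] unfolding Pg_def by auto
          have ig: "i < g" using lessg i by auto
          have g2: "2 \<le> g" using ig i by auto
          have "q i \<le> w" using bw ig i by auto
          then have uw: "u < w" using i by simp
          have wdef: "w = q (g - 1)" unfolding w_def using g2 by simp
          have pass: "Hc isL (ZLf q g h + ZHf q g h) \<le> ZHf q g h" using ce[of g h] h g1 by auto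
          have C: "int (\<Sum>i=1..g-1. q i - u) \<le> int (need k u q (ZLf q g h + ZHf q g h)) - int (Hc isL (ZLf q g h + ZHf q g h))"
            by (rule claimC[OF so g2 gk wdef uw _ _ _ pass]) (use wq h in auto)
          have sub: "{i\<in>{1..k}. q i < q g} \<subseteq> {1..g-1}"
          proof
            fix x assume x: "x \<in> {i\<in>{1..k}. q i < q g}"
            then have "x < g" using lessg by blast
            then show "x \<in> {1..g-1}" using x by auto
          qed
          have PP: "Pg \<le> (\<Sum>i=1..g-1. q i - u)" unfolding Pg_def
            by (rule sum_mono2[OF _ sub]) auto
          have vZ: "int (need k u q (ZLf q g h + ZHf q g h)) - int (Hc isL (ZLf q g h + ZHf q g h)) \<le> Phi k u q isL N"
            by (rule Phi_ge[OF ZhN])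
          have c: "(if isL 1 \<and> q g > u then 1 else 0) = (0::int)" using False by simp
          have hh: "Hc isL j = 1 + Hc (\<lambda>i. isL (Suc i)) j'" using hs False by simp
          have "need k u q j \<le> (\<Sum>i=1..g-1. q i - u)" using PP le by linarith
          then have PPi: "int (need k u q j) \<le> int (\<Sum>i=1..g-1. q i - u)" by (rule of_nat_mono)
          show ?thesis unfolding c j'(2) using n23i hh PPi C vZ by linarith
        qed
      qed
    qed
  qed
  then show ?thesis unfolding isL_def by simp
qed

lemma sorted_dec:
  assumes "sorted_on k q" "1 \<le> g" "g \<le> k" "cap0 q (g - 1) < q g"
  shows "sorted_on k (q(g := q g - 1))"
  unfolding sorted_on_def
proof (intro allI impI)
  fix i j assume ij: "1 \<le> i" "i \<le> j" "j \<le> k"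
  have s: "q i \<le> q j" using sorted_le[OF assms(1) ij] .
  show "(q(g := q g - 1)) i \<le> (q(g := q g - 1)) j"
  proof (cases "j = g")
    case True
    show ?thesis
    proof (cases "i = g")
      case True then show ?thesis using \<open>j = g\<close> by simp
    next
      case False
      then have "i < g" using ij True by simp
      then have "q i \<le> cap0 q (g - 1)" using below_w[OF assms(1) assms(3) ij(1)] by simp
      then show ?thesis using False True assms(4) by simp
    qed
  next
    case False
    then show ?thesis using s by auto
  qed
qed

lemma sum_dec:
  fixes q :: "nat \<Rightarrow> nat"
  assumes "g \<in> {1..k}" "1 \<le> q g"
  shows "(\<Sum>r=1..k. (q(g := q g - 1)) r) + 1 = (\<Sum>r=1..k. q r)"
  using sum_upd_eq[of "{1..k}" "\<lambda>x. x" q g "q g - 1"] assms by simp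

definition st :: "nat \<Rightarrow> (nat \<Rightarrow> nat) \<Rightarrow> nat \<Rightarrow> nat \<Rightarrow> nat" where
  "st m y j r = m - card {s\<in>{1..j}. y s = r}"

lemma card_Suc_filter: "card {s\<in>{1..Suc j}. y s = r} = card {s\<in>{1..j}. y s = r} + (if y (Suc j) = r then 1 else 0)"
proof -
  have e: "{s\<in>{1..Suc j}. y s = r} = (if y (Suc j) = r then insert (Suc j) {s\<in>{1..j}. y s = r} else {s\<in>{1..j}. y s = r})"
    by (auto simp: le_Suc_eq)
  show ?thesis unfolding e by simp
qed

lemma st_Suc: "st m y (Suc j) = (st m y j)(y (Suc j) := st m y j (y (Suc j)) - 1)"
proof (rule ext)
  fix r
  show "st m y (Suc j) r = ((st m y j)(y (Suc j) := st m y j (y (Suc j)) - 1)) r"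
    unfolding st_def card_Suc_filter[of j y] by (cases "r = y (Suc j)") auto
qed

lemma st_0: "st m y 0 = (\<lambda>_. m)"
  by (rule ext) (simp add: st_def)

lemma alloc_pos:
  assumes "is_alloc k m n y" "j < n"
  shows "1 \<le> st m y j (y (Suc j))" "y (Suc j) \<in> {1..k}"
proof -
  have A: "\<forall>t \<in> {1..n}. y t \<in> {1..k}" "\<forall>r \<in> {1..k}. card {t \<in> {1..n}. y t = r} = m"
    using assms(1) unfolding is_alloc_def by auto
  have sj: "Suc j \<in> {1..n}" using assms(2) by simp
  show r: "y (Suc j) \<in> {1..k}" using A(1) sj by (rule bspec)
  have m: "card {t\<in>{1..n}. y t = y (Suc j)} = m" using A(2) r by (rule bspec)
  have sub: "{s\<in>{1..j}. y s = y (Suc j)} \<subseteq> {t\<in>{1..n}. y t = y (Suc j)}" using assms(2) by auto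
  have mem: "Suc j \<in> {t\<in>{1..n}. y t = y (Suc j)}" using assms(2) by simp
  have nmem: "Suc j \<notin> {s\<in>{1..j}. y s = y (Suc j)}" by simp
  have ne: "{s\<in>{1..j}. y s = y (Suc j)} \<noteq> {t\<in>{1..n}. y t = y (Suc j)}"
  proof
    assume "{s\<in>{1..j}. y s = y (Suc j)} = {t\<in>{1..n}. y t = y (Suc j)}"
    then show False using mem nmem by simp
  qed
  have ps: "{s\<in>{1..j}. y s = y (Suc j)} \<subset> {t\<in>{1..n}. y t = y (Suc j)}" by (rule psubsetI[OF sub ne])
  have fin: "finite {t\<in>{1..n}. y t = y (Suc j)}" by simp
  have "card {s\<in>{1..j}. y s = y (Suc j)} < card {t\<in>{1..n}. y t = y (Suc j)}" by (rule psubset_card_mono[OF fin ps])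
  then have "card {s\<in>{1..j}. y s = y (Suc j)} < m" using m by simp
  then show "1 \<le> st m y j (y (Suc j))" unfolding st_def by simp
qed

definition Rc :: "nat \<Rightarrow> nat \<Rightarrow> nat \<Rightarrow> (nat \<Rightarrow> real) \<Rightarrow> real \<Rightarrow> (nat \<Rightarrow> nat) \<Rightarrow> nat \<Rightarrow> nat" where
  "Rc m n u T L y j = card {s\<in>{Suc j..n}. T s = L \<and> u < st m y (s - 1) (y s)}"

lemma Rc_n: "Rc m n u T L y n = 0"
  by (simp add: Rc_def)

lemma Rc_step: assumes "j < n"
  shows "Rc m n u T L y j = (if T (Suc j) = L \<and> u < st m y j (y (Suc j)) then 1 else 0) + Rc m n u T L y (Suc j)"
proof -
  have e: "{s\<in>{Suc j..n}. T s = L \<and> u < st m y (s - 1) (y s)} =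
      (if T (Suc j) = L \<and> u < st m y j (y (Suc j)) then insert (Suc j) {s\<in>{Suc (Suc j)..n}. T s = L \<and> u < st m y (s - 1) (y s)}
       else {s\<in>{Suc (Suc j)..n}. T s = L \<and> u < st m y (s - 1) (y s)})"
    using assms by (auto simp: Suc_le_eq le_less)
  show ?thesis unfolding Rc_def e by simp
qed

lemma Phi_zero: "Phi k u q isL 0 = 0"
  unfolding Phi_def by simp

lemma LB:
  assumes al: "is_alloc k m n y" and j: "j \<le> n"
  shows "Phi k u (st m y j) (\<lambda>i. T (j + i) = L) (n - j) \<le> int (Rc m n u T L y j)"
  using j
proof (induction "n - j" arbitrary: j)
  case 0
  then have "j = n" by simp
  then show ?case by (simp add: Phi_zero Rc_n)
next
  case (Suc d)
  then have jn: "j < n" by simp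
  have IH: "Phi k u (st m y (Suc j)) (\<lambda>i. T (Suc j + i) = L) (n - Suc j) \<le> int (Rc m n u T L y (Suc j))"
    using Suc.hyps(1)[of "Suc j"] Suc.hyps(2) jn by simp
  have p: "Phi k u (st m y j) (\<lambda>i. T (j + i) = L) (n - j) \<le>
      (if T (j + 1) = L \<and> u < st m y j (y (Suc j)) then 1 else 0) +
      Phi k u ((st m y j)(y (Suc j) := st m y j (y (Suc j)) - 1)) (\<lambda>i. T (j + Suc i) = L) (n - j - 1)"
    using PhiLB[of "st m y j" "y (Suc j)" k "n - j" u "\<lambda>i. T (j + i) = L"] alloc_pos[OF al jn] jn by simp
  have e1: "(st m y j)(y (Suc j) := st m y j (y (Suc j)) - 1) = st m y (Suc j)" by (rule st_Suc[symmetric])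
  have e2: "(\<lambda>i. T (j + Suc i) = L) = (\<lambda>i. T (Suc j + i) = L)" by simp
  have e3: "n - j - 1 = n - Suc j" by simp
  show ?case using p IH Rc_step[where m=m and u=u and T=T and L=L and y=y, OF jn] unfolding e1 e2 e3
    by (cases "T (Suc j) = L \<and> u < st m y j (y (Suc j))"; simp; linarith)
qed

lemma alg_cap_Suc': "alg_cap k ms T (Suc j) = (alg_cap k ms T j)(alg1 k ms T (Suc j) := alg_cap k ms T j (alg1 k ms T (Suc j)) - 1)"
  by (rule ext) (simp add: alg1_def)

lemma alg1_Suc: "alg1 k ms T (Suc j) = TA k (alg_cap k ms T j) (\<lambda>i. T (j + i))"
  by (simp add: alg1_def)

lemma alg_inv:
  assumes n: "n = k * m" and j: "j \<le> n"
  shows "sorted_on k (alg_cap k (\<lambda>_. m) T j) \<and>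
         (\<forall>r\<in>{1..k}. alg_cap k (\<lambda>_. m) T j r + card {s\<in>{1..j}. alg1 k (\<lambda>_. m) T s = r} = m) \<and>
         (\<forall>s\<in>{1..j}. alg1 k (\<lambda>_. m) T s \<in> {1..k}) \<and>
         (\<Sum>r=1..k. alg_cap k (\<lambda>_. m) T j r) = n - j"
  using j
proof (induction j)
  case 0
  have "sorted_on k (\<lambda>_. m)" unfolding sorted_on_def by simp
  then show ?case using n by simp
next
  case (Suc j)
  let ?q = "alg_cap k (\<lambda>_. m) T j"
  let ?x = "alg1 k (\<lambda>_. m) T"
  let ?g = "?x (Suc j)"
  have jn: "j < n" using Suc by simp
  have IH: "sorted_on k ?q" "\<forall>r\<in>{1..k}. ?q r + card {s\<in>{1..j}. ?x s = r} = m"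
    "\<forall>s\<in>{1..j}. ?x s \<in> {1..k}" "(\<Sum>r=1..k. ?q r) = n - j"
    using Suc by auto
  have gdef: "?g = TA k ?q (\<lambda>i. T (j + i))" by (rule alg1_Suc)
  have TP: "1 \<le> ?g \<and> ?g \<le> k \<and> cond k ?q (\<lambda>i. T (j + i)) ?g \<and>
         (\<forall>g'. ?g < g' \<and> g' \<le> k \<longrightarrow> \<not> cond k ?q (\<lambda>i. T (j + i)) g')"
    unfolding gdef by (rule TA_props[OF IH(1)]) (use IH(4) jn in simp)
  then have g1: "1 \<le> ?g" and gk: "?g \<le> k" and cg: "cond k ?q (\<lambda>i. T (j + i)) ?g" by auto
  have wle: "cap0 ?q (?g - 1) \<le> ?q ?g"
  proof (cases "?g = 1")
    case True then show ?thesis by simp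
  next
    case False then show ?thesis using sorted_le[OF IH(1), of "?g - 1" "?g"] g1 gk by simp
  qed
  have wq: "cap0 ?q (?g - 1) < ?q ?g" using cg wle g1 unfolding cond_def by auto
  have qg1: "1 \<le> ?q ?g" using wq by simp
  have eq: "alg_cap k (\<lambda>_. m) T (Suc j) = ?q(?g := ?q ?g - 1)" by (rule alg_cap_Suc')
  have s1: "sorted_on k (alg_cap k (\<lambda>_. m) T (Suc j))" unfolding eq by (rule sorted_dec[OF IH(1) g1 gk wq])
  have s2: "\<forall>r\<in>{1..k}. alg_cap k (\<lambda>_. m) T (Suc j) r + card {s\<in>{1..Suc j}. ?x s = r} = m"
  proof
    fix r assume r: "r \<in> {1..k}"
    have c: "card {s\<in>{1..Suc j}. ?x s = r} = card {s\<in>{1..j}. ?x s = r} + (if ?g = r then 1 else 0)"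
      by (rule card_Suc_filter)
    have ir: "?q r + card {s\<in>{1..j}. ?x s = r} = m" using IH(2) r by blast
    show "alg_cap k (\<lambda>_. m) T (Suc j) r + card {s\<in>{1..Suc j}. ?x s = r} = m"
    proof (cases "?g = r")
      case True
      then have "1 \<le> ?q r" using qg1 by simp
      then show ?thesis unfolding eq c using ir True by simp
    next
      case False
      then show ?thesis unfolding eq c using ir by simp
    qed
  qed
  have s3: "\<forall>s\<in>{1..Suc j}. ?x s \<in> {1..k}" using IH(3) g1 gk by (auto simp: le_Suc_eq)
  have s4: "(\<Sum>r=1..k. alg_cap k (\<lambda>_. m) T (Suc j) r) = n - Suc j"
    unfolding eq using sum_dec[of ?g k ?q] g1 gk qg1 IH(4) by simp
  show ?case using s1 s2 s3 s4 by blast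
qed

lemma UB:
  assumes n: "n = k * m" and vals: "\<forall>t\<in>{1..n}. T t = H \<or> T t = L" and HL: "H < L" and j: "j \<le> n"
  shows "int (Rc m n u T L (alg1 k (\<lambda>_. m) T) j) \<le> Phi k u (alg_cap k (\<lambda>_. m) T j) (\<lambda>i. T (j + i) = L) (n - j)"
  using j
proof (induction "n - j" arbitrary: j)
  case 0
  then have "j = n" by simp
  then show ?case by (simp add: Phi_zero Rc_n)
next
  case (Suc d)
  then have jn: "j < n" by simp
  let ?q = "alg_cap k (\<lambda>_. m) T j"
  let ?x = "alg1 k (\<lambda>_. m) T"
  let ?g = "?x (Suc j)"
  have IH: "int (Rc m n u T L ?x (Suc j)) \<le> Phi k u (alg_cap k (\<lambda>_. m) T (Suc j)) (\<lambda>i. T (Suc j + i) = L) (n - Suc j)"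
    using Suc.hyps(1)[of "Suc j"] Suc.hyps(2) jn by simp
  have inv: "sorted_on k ?q" "\<forall>r\<in>{1..k}. ?q r + card {s\<in>{1..j}. ?x s = r} = m"
      "(\<Sum>r=1..k. ?q r) = n - j"
    using alg_inv[OF n, of j T] jn by auto
  have gk: "?g \<in> {1..k}" using alg_inv[OF n, of "Suc j" T] jn by auto
  have stg: "st m ?x j ?g = ?q ?g" using inv(2) gk unfolding st_def by (metis add_diff_cancel_right')
  have gdef: "?g = TA k ?q (\<lambda>i. T (j + i))" by (rule alg1_Suc)
  have vals': "\<forall>i\<in>{1..n - j}. T (j + i) = H \<or> T (j + i) = L"
  proof
    fix i assume "i \<in> {1..n - j}"
    then have "j + i \<in> {1..n}" by auto
    then show "T (j + i) = H \<or> T (j + i) = L" using vals by blast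
  qed
  have P: "(if T (j + 1) = L \<and> ?q ?g > u then 1 else 0) + Phi k u (?q(?g := ?q ?g - 1)) (\<lambda>i. T (j + Suc i) = L) (n - j - 1)
         \<le> Phi k u ?q (\<lambda>i. T (j + i) = L) (n - j)"
    using PhiUB[OF inv(1) inv(3)[symmetric] _ vals' HL gdef, of u] jn by simp
  have e1: "?q(?g := ?q ?g - 1) = alg_cap k (\<lambda>_. m) T (Suc j)" by (rule alg_cap_Suc'[symmetric])
  have e2: "(\<lambda>i. T (j + Suc i) = L) = (\<lambda>i. T (Suc j + i) = L)" by simp
  have e3: "n - j - 1 = n - Suc j" by simp
  have R: "Rc m n u T L ?x j = (if T (Suc j) = L \<and> u < ?q ?g then 1 else 0) + Rc m n u T L ?x (Suc j)"
    using Rc_step[where m=m and u=u and T=T and L=L and y="?x", OF jn] stg by simp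
  show ?case using P IH R unfolding e1 e2 e3
    by (cases "T (Suc j) = L \<and> u < ?q ?g"; simp; linarith)
qed

lemma pos_Suc: assumes "1 \<le> s" shows "pos y s = Suc (card {s'\<in>{1..s-1}. y s' = y s})"
proof -
  have e: "{s'\<in>{1..s}. y s' = y s} = insert s {s'\<in>{1..s-1}. y s' = y s}" using assms by auto
  have "s \<notin> {s'\<in>{1..s-1}. y s' = y s}" by auto
  then show ?thesis unfolding pos_def e by simp
qed

lemma st_pos: assumes "1 \<le> s" "c \<le> m"
  shows "(m - c < st m y (s - 1) (y s)) = (pos y s \<le> c)"
  unfolding st_def pos_Suc[OF assms(1)] using assms(2) by arith

lemma cnt_R: assumes "c \<le> m"
  shows "card {t\<in>{1..n}. T t = L \<and> pos y t \<le> c} = Rc m n (m - c) T L y 0"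
proof -
  have "{t\<in>{1..n}. T t = L \<and> pos y t \<le> c} = {s\<in>{Suc 0..n}. T s = L \<and> m - c < st m y (s - 1) (y s)}"
  proof (intro Collect_cong)
    fix t
    show "(t \<in> {1..n} \<and> T t = L \<and> pos y t \<le> c) = (t \<in> {Suc 0..n} \<and> T t = L \<and> m - c < st m y (t - 1) (y t))"
      using st_pos[of t c m y] assms by auto
  qed
  then show ?thesis unfolding Rc_def by simp
qed

lemma cnt_le:
  assumes n: "n = k * m" and vals: "\<forall>t\<in>{1..n}. T t = H \<or> T t = L" and HL: "H < L"
    and al: "is_alloc k m n y" and c: "c \<le> m"
  shows "card {t\<in>{1..n}. T t = L \<and> pos (alg1 k (\<lambda>_. m) T) t \<le> c} \<le> card {t\<in>{1..n}. T t = L \<and> pos y t \<le> c}"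
proof -
  have u: "int (Rc m n (m - c) T L (alg1 k (\<lambda>_. m) T) 0) \<le> Phi k (m - c) (alg_cap k (\<lambda>_. m) T 0) (\<lambda>i. T (0 + i) = L) (n - 0)"
    by (rule UB[OF n vals HL]) simp
  have l: "Phi k (m - c) (st m y 0) (\<lambda>i. T (0 + i) = L) (n - 0) \<le> int (Rc m n (m - c) T L y 0)"
    by (rule LB[OF al]) simp
  have "alg_cap k (\<lambda>_. m) T 0 = st m y 0" by (simp add: st_0)
  then have "int (Rc m n (m - c) T L (alg1 k (\<lambda>_. m) T) 0) \<le> int (Rc m n (m - c) T L y 0)" using u l by simp
  then show ?thesis unfolding cnt_R[OF c] by simp
qed

lemma rank_count:
  fixes A :: "nat set"
  assumes fA: "finite A"
  shows "card {t\<in>A. card {s\<in>A. s \<le> t} \<le> c} = min c (card A)"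
proof -
  define rk where "rk t = card {s\<in>A. s \<le> t}" for t
  have lt: "rk s < rk t" if "s \<in> A" "t \<in> A" "s < t" for s t
  proof -
    have sub: "{s'\<in>A. s' \<le> s} \<subseteq> {s'\<in>A. s' \<le> t}" using that by auto
    have ne: "{s'\<in>A. s' \<le> s} \<noteq> {s'\<in>A. s' \<le> t}"
    proof
      assume eq: "{s'\<in>A. s' \<le> s} = {s'\<in>A. s' \<le> t}"
      have "t \<in> {s'\<in>A. s' \<le> t}" using that by simp
      then have "t \<in> {s'\<in>A. s' \<le> s}" unfolding eq .
      then show False using that by simp
    qed
    have "finite {s'\<in>A. s' \<le> t}" using fA by simp
    then show ?thesis unfolding rk_def by (rule psubset_card_mono) (use sub ne in blast)
  qed
  have inj: "inj_on rk A"
  proof (rule inj_onI)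
    fix s t assume st: "s \<in> A" "t \<in> A" "rk s = rk t"
    show "s = t"
    proof (rule ccontr)
      assume "s \<noteq> t"
      then have "s < t \<or> t < s" by arith
      then show False
      proof
        assume "s < t" then have "rk s < rk t" using lt st by blast
        then show False using st by simp
      next
        assume "t < s" then have "rk t < rk s" using lt st by blast
        then show False using st by simp
      qed
    qed
  qed
  have img_sub: "rk ` A \<subseteq> {1..card A}"
  proof
    fix x assume "x \<in> rk ` A"
    then obtain t where t: "t \<in> A" "x = rk t" by blast
    have "t \<in> {s\<in>A. s \<le> t}" using t by simp
    then have "{s\<in>A. s \<le> t} \<noteq> {}" by blast
    moreover have "finite {s\<in>A. s \<le> t}" using fA by simp
    ultimately have "0 < card {s\<in>A. s \<le> t}" by (simp add: card_gt_0_iff)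
    then have "1 \<le> rk t" unfolding rk_def by simp
    moreover have "rk t \<le> card A" unfolding rk_def by (rule card_mono[OF fA]) auto
    ultimately show "x \<in> {1..card A}" using t by simp
  qed
  have ci: "card (rk ` A) = card {1..card A}" using card_image[OF inj] by simp
  have img: "rk ` A = {1..card A}"
    by (rule card_subset_eq[OF _ img_sub ci]) simp
  have inj2: "inj_on rk {t\<in>A. rk t \<le> c}" by (rule inj_on_subset[OF inj]) auto
  have "rk ` {t\<in>A. rk t \<le> c} = {x\<in>rk ` A. x \<le> c}" by auto
  also have "\<dots> = {1..min c (card A)}" unfolding img by auto
  finally have "card {t\<in>A. rk t \<le> c} = card {1..min c (card A)}" using card_image[OF inj2] by simp
  then show ?thesis unfolding rk_def by simp
qed

lemma K_eq:
  assumes al: "is_alloc k m n y" and c: "c \<le> m"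
  shows "card {t\<in>{1..n}. pos y t \<le> c} = k * c"
proof -
  have A1: "\<forall>t \<in> {1..n}. y t \<in> {1..k}" and A2: "\<forall>r \<in> {1..k}. card {t \<in> {1..n}. y t = r} = m"
    using al unfolding is_alloc_def by auto
  define B where "B r = {t\<in>{t\<in>{1..n}. y t = r}. card {s\<in>{t\<in>{1..n}. y t = r}. s \<le> t} \<le> c}" for r
  have posr: "pos y t = card {s\<in>{t'\<in>{1..n}. y t' = y t}. s \<le> t}" if "t \<in> {1..n}" for t
  proof -
    have "{s\<in>{1..t}. y s = y t} = {s\<in>{t'\<in>{1..n}. y t' = y t}. s \<le> t}" using that by auto
    then show ?thesis unfolding pos_def by simp
  qed
  have e: "{t\<in>{1..n}. pos y t \<le> c} = (\<Union>r\<in>{1..k}. B r)"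
  proof
    show "{t\<in>{1..n}. pos y t \<le> c} \<subseteq> (\<Union>r\<in>{1..k}. B r)"
    proof
      fix t assume t: "t \<in> {t\<in>{1..n}. pos y t \<le> c}"
      then have "y t \<in> {1..k}" using A1 by auto
      moreover have "t \<in> B (y t)" unfolding B_def using t posr[of t] by auto
      ultimately show "t \<in> (\<Union>r\<in>{1..k}. B r)" by blast
    qed
  next
    show "(\<Union>r\<in>{1..k}. B r) \<subseteq> {t\<in>{1..n}. pos y t \<le> c}"
    proof
      fix t assume "t \<in> (\<Union>r\<in>{1..k}. B r)"
      then obtain r where r: "r \<in> {1..k}" "t \<in> B r" by blast
      then have t: "t \<in> {1..n}" "y t = r" unfolding B_def by auto
      then show "t \<in> {t\<in>{1..n}. pos y t \<le> c}" using r(2) posr[OF t(1)] unfolding B_def by auto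
    qed
  qed
  have cB: "card (B r) = c" if "r \<in> {1..k}" for r
  proof -
    have "card (B r) = min c (card {t\<in>{1..n}. y t = r})" unfolding B_def by (rule rank_count) simp
    then show ?thesis using A2 that c by simp
  qed
  have "card (\<Union>r\<in>{1..k}. B r) = (\<Sum>r\<in>{1..k}. card (B r))"
  proof (rule card_UN_disjoint)
    show "finite {1..k}" by simp
    show "\<forall>r\<in>{1..k}. finite (B r)" unfolding B_def by simp
    show "\<forall>i\<in>{1..k}. \<forall>j\<in>{1..k}. i \<noteq> j \<longrightarrow> B i \<inter> B j = {}" unfolding B_def by blast
  qed
  also have "\<dots> = (\<Sum>r\<in>{1..k}. c)" by (rule sum.cong) (use cB in auto)
  finally show ?thesis unfolding e by simp
qed

lemma pos_bounds:
  assumes al: "is_alloc k m n y" and t: "t \<in> {1..n}"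
  shows "1 \<le> pos y t" "pos y t \<le> m"
proof -
  have A1: "\<forall>t \<in> {1..n}. y t \<in> {1..k}" and A2: "\<forall>r \<in> {1..k}. card {t \<in> {1..n}. y t = r} = m"
    using al unfolding is_alloc_def by auto
  have "t \<in> {s\<in>{1..t}. y s = y t}" using t by simp
  then have "{s\<in>{1..t}. y s = y t} \<noteq> {}" by blast
  then show "1 \<le> pos y t" unfolding pos_def by (simp add: card_gt_0_iff Suc_le_eq)
  have yt: "y t \<in> {1..k}" using A1 t by blast
  have "pos y t \<le> card {s\<in>{1..n}. y s = y t}" unfolding pos_def by (rule card_mono) (use t in auto)
  then show "pos y t \<le> m" using A2 yt by simp
qed

lemma f_tel:
  fixes f :: "nat \<Rightarrow> nat"
  assumes "1 \<le> p" "p \<le> m"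
  shows "real (f p) = real (f m) + (\<Sum>c\<in>{1..<m}. if p \<le> c then real (f c) - real (f (Suc c)) else 0)"
proof -
  have "(\<Sum>c\<in>{1..<m}. if p \<le> c then real (f c) - real (f (Suc c)) else 0) = (\<Sum>c\<in>{c\<in>{1..<m}. p \<le> c}. real (f c) - real (f (Suc c)))"
    by (rule sum.inter_filter[symmetric]) simp
  also have "{c\<in>{1..<m}. p \<le> c} = {p..<m}" using assms by auto
  also have "(\<Sum>c\<in>{p..<m}. real (f c) - real (f (Suc c))) = - (\<Sum>c\<in>{p..<m}. real (f (Suc c)) - real (f c))"
    by (simp add: sum_negf[symmetric])
  also have "(\<Sum>c\<in>{p..<m}. real (f (Suc c)) - real (f c)) = real (f m) - real (f p)"
    using sum_Suc_diff'[OF assms(2), of "\<lambda>c. real (f c)"] by simp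
  finally show ?thesis by simp
qed

lemma sum_if_const: "finite A \<Longrightarrow> (\<Sum>t\<in>A. if P t then (K::real) else 0) = K * real (card {t\<in>A. P t})"
proof -
  assume f: "finite A"
  have "(\<Sum>t\<in>A. if P t then K else 0) = (\<Sum>t\<in>{t\<in>A. P t}. K)" by (rule sum.inter_filter[OF f, symmetric])
  then show ?thesis by simp
qed

lemma cost_decomp:
  assumes al: "is_alloc k m n y" and vals: "\<forall>t\<in>{1..n}. T t = H \<or> T t = L"
  shows "total_cost f T n y = real (f m) * (\<Sum>t=1..n. T t) +
    (\<Sum>c\<in>{1..<m}. (real (f c) - real (f (Suc c))) *
        (H * real (card {t\<in>{1..n}. pos y t \<le> c}) + (L - H) * real (card {t\<in>{1..n}. T t = L \<and> pos y t \<le> c})))"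
proof -
  define F where "F c = real (f c) - real (f (Suc c))" for c
  have "total_cost f T n y = (\<Sum>t=1..n. (real (f m) + (\<Sum>c\<in>{1..<m}. if pos y t \<le> c then F c else 0)) * T t)"
    unfolding total_cost_def
  proof (rule sum.cong)
    fix t assume t: "t \<in> {1..n}"
    show "real (f (pos y t)) * T t = (real (f m) + (\<Sum>c\<in>{1..<m}. if pos y t \<le> c then F c else 0)) * T t"
      using f_tel[OF pos_bounds[OF al t], of f] unfolding F_def by simp
  qed simp
  also have "\<dots> = (\<Sum>t=1..n. real (f m) * T t) + (\<Sum>t=1..n. \<Sum>c\<in>{1..<m}. if pos y t \<le> c then F c * T t else 0)"
  proof -
    have "(\<Sum>t=1..n. (real (f m) + (\<Sum>c\<in>{1..<m}. if pos y t \<le> c then F c else 0)) * T t)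
        = (\<Sum>t=1..n. real (f m) * T t + (\<Sum>c\<in>{1..<m}. if pos y t \<le> c then F c * T t else 0))"
    proof (rule sum.cong)
      fix t
      have "(\<Sum>c\<in>{1..<m}. if pos y t \<le> c then F c else 0) * T t = (\<Sum>c\<in>{1..<m}. (if pos y t \<le> c then F c else 0) * T t)"
        by (rule sum_distrib_right)
      also have "\<dots> = (\<Sum>c\<in>{1..<m}. if pos y t \<le> c then F c * T t else 0)" by (rule sum.cong) auto
      finally show "(real (f m) + (\<Sum>c\<in>{1..<m}. if pos y t \<le> c then F c else 0)) * T t
          = real (f m) * T t + (\<Sum>c\<in>{1..<m}. if pos y t \<le> c then F c * T t else 0)"
        by (simp add: distrib_right)
    qed simp
    then show ?thesis by (simp add: sum.distrib)
  qed
  also have "(\<Sum>t=1..n. \<Sum>c\<in>{1..<m}. if pos y t \<le> c then F c * T t else 0) = (\<Sum>c\<in>{1..<m}. \<Sum>t=1..n. if pos y t \<le> c then F c * T t else 0)"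
    by (rule sum.swap)
  also have "\<dots> = (\<Sum>c\<in>{1..<m}. F c * (H * real (card {t\<in>{1..n}. pos y t \<le> c}) + (L - H) * real (card {t\<in>{1..n}. T t = L \<and> pos y t \<le> c})))"
  proof (rule sum.cong)
    fix c
    have "(\<Sum>t=1..n. if pos y t \<le> c then F c * T t else 0) = (\<Sum>t=1..n. F c * (if pos y t \<le> c then T t else 0))"
      by (rule sum.cong) auto
    also have "\<dots> = F c * (\<Sum>t=1..n. if pos y t \<le> c then T t else 0)"
      by (rule sum_distrib_left[symmetric])
    finally have "(\<Sum>t=1..n. if pos y t \<le> c then F c * T t else 0) = F c * (\<Sum>t=1..n. if pos y t \<le> c then T t else 0)" .
    also have "(\<Sum>t=1..n. if pos y t \<le> c then T t else 0) = (\<Sum>t=1..n. (if pos y t \<le> c then H else 0) + (if T t = L \<and> pos y t \<le> c then L - H else 0))"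
    proof (rule sum.cong)
      fix t assume "t \<in> {1..n}"
      then have "T t = H \<or> T t = L" using vals by blast
      then show "(if pos y t \<le> c then T t else 0) = (if pos y t \<le> c then H else 0) + (if T t = L \<and> pos y t \<le> c then L - H else 0)"
        by auto
    qed simp
    also have "\<dots> = H * real (card {t\<in>{1..n}. pos y t \<le> c}) + (L - H) * real (card {t\<in>{1..n}. T t = L \<and> pos y t \<le> c})"
      by (simp add: sum.distrib sum_if_const)
    finally show "(\<Sum>t=1..n. if pos y t \<le> c then F c * T t else 0) = F c * (H * real (card {t\<in>{1..n}. pos y t \<le> c}) + (L - H) * real (card {t\<in>{1..n}. T t = L \<and> pos y t \<le> c}))" .
  qed simp
  finally show ?thesis unfolding F_def by (simp add: sum_distrib_left)
qed

theorem theorem2: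
  fixes k m n :: nat and f :: "nat \<Rightarrow> nat" and T :: "nat \<Rightarrow> real" and H L :: real
  assumes "k > 0" and "m > 0" and "n = k * m"
    and "antimono f"
    and "0 \<le> H" and "H < L"
    and "\<forall>t \<in> {1..n}. T t \<in> {H, L}"
  shows "is_alloc k m n (alg1 k (\<lambda>_. m) T) \<and>
         (\<forall>y. is_alloc k m n y \<longrightarrow>
              total_cost f T n (alg1 k (\<lambda>_. m) T) \<le> total_cost f T n y)"
proof -
  note n = assms(3)
  have vals: "\<forall>t\<in>{1..n}. T t = H \<or> T t = L" using assms(7) by blast
  let ?x = "alg1 k (\<lambda>_. m) T"
  have inv: "\<forall>r\<in>{1..k}. alg_cap k (\<lambda>_. m) T n r + card {s\<in>{1..n}. ?x s = r} = m"
      "\<forall>s\<in>{1..n}. ?x s \<in> {1..k}" "(\<Sum>r=1..k. alg_cap k (\<lambda>_. m) T n r) = 0"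
    using alg_inv[OF n, of n T] by auto
  have z: "\<forall>r\<in>{1..k}. alg_cap k (\<lambda>_. m) T n r = 0"
    using inv(3) sum_eq_0_iff[of "{1..k}" "alg_cap k (\<lambda>_. m) T n"] by simp
  have alx: "is_alloc k m n ?x" unfolding is_alloc_def using inv(1,2) z by auto
  have "total_cost f T n ?x \<le> total_cost f T n y" if al: "is_alloc k m n y" for y
  proof -
    have le: "(real (f c) - real (f (Suc c))) *
        (H * real (card {t\<in>{1..n}. pos ?x t \<le> c}) + (L - H) * real (card {t\<in>{1..n}. T t = L \<and> pos ?x t \<le> c}))
      \<le> (real (f c) - real (f (Suc c))) *
        (H * real (card {t\<in>{1..n}. pos y t \<le> c}) + (L - H) * real (card {t\<in>{1..n}. T t = L \<and> pos y t \<le> c}))"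
      if c: "c \<in> {1..<m}" for c
    proof -
      have cm: "c \<le> m" using c by simp
      have F0: "0 \<le> real (f c) - real (f (Suc c))"
        using assms(4) unfolding antimono_def by (simp add: le_SucI)
      have kx: "card {t\<in>{1..n}. pos ?x t \<le> c} = k * c" by (rule K_eq[OF alx cm])
      have ky: "card {t\<in>{1..n}. pos y t \<le> c} = k * c" by (rule K_eq[OF al cm])
      have cl: "card {t\<in>{1..n}. T t = L \<and> pos ?x t \<le> c} \<le> card {t\<in>{1..n}. T t = L \<and> pos y t \<le> c}"
        by (rule cnt_le[OF n vals assms(6) al cm])
      have "(L - H) * real (card {t\<in>{1..n}. T t = L \<and> pos ?x t \<le> c}) \<le> (L - H) * real (card {t\<in>{1..n}. T t = L \<and> pos y t \<le> c})"
        by (rule mult_left_mono) (use cl assms(6) in auto)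
      then show ?thesis unfolding kx ky by (intro mult_left_mono[OF _ F0]) simp
    qed
    show ?thesis unfolding cost_decomp[OF alx vals] cost_decomp[OF al vals]
      by (intro add_left_mono sum_mono le)
  qed
  then show ?thesis using alx by blast
qed

end
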